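(* Let $a\ge0$ and $\mathfrak g=\mathfrak r'_{3,a}$ (basis $\{e_1,e_2,e_3\}$, nonzero brackets $[e_1,e_2]=ae_2-e_3$, $[e_1,e_3]=e_2+ae_3$). Consider the action of $\mathbb R^\times\mathrm{Aut}(\mathfrak g)$ on $\mathrm{GL}_3(\mathbb R)/\mathrm{O}(3)$ with the natural Riemannian metric, and let $\langle\cdot,\cdot\rangle_0$ be the inner product making $\{e_1,e_2,e_3\}$ orthonormal. Then (1) the action is of cohomogeneity one, and $(\mathbb R^\times\mathrm{Aut}(\mathfrak g)).\langle\cdot,\cdot\rangle_0$ is the unique singular orbit; (2) $(\mathbb R^\times\mathrm{Aut}(\mathfrak g)).\langle\cdot,\cdot\rangle_0$ is the unique minimal orbit.
   Context: Identify $\mathfrak g\cong\mathbb R^3$ via the basis. $\mathrm{GL}_3(\mathbb R)/\mathrm{O}(3)$ is identified with the set of inner products on $\mathfrak g$ via $g.\langle\cdot,\cdot\rangle=\langle g^{-1}\cdot,g^{-1}\cdot\rangle$ (base point $\langle\cdot,\cdot\rangle_0$). The natural Riemannian metric is the $\mathrm{GL}_3(\mathbb R)$-invariant metric corresponding to $\langle X,Y\rangle=\mathrm{tr}(XY)$ on $\mathrm{sym}(3)$ (reductive complement $\mathfrak{gl}_3=\mathfrak o(3)\oplus\mathrm{sym}(3)$). $\mathbb R^\times\mathrm{Aut}(\mathfrak g)=\{c\varphi:c\ne0,\ \varphi\in\mathrm{Aut}(\mathfrak g)\}\subset\mathrm{GL}_3(\mathbb R)$ acts by restriction. For an isometric action,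 orbits of maximal dimension are regular and the others singular; the action is of cohomogeneity one if regular orbits have codimension one. An orbit is minimal if its mean curvature vector vanishes. *)

theory Defs
  imports "HOL-Analysis.Analysis"
begin

type_synonym vec3 = "real^3"
type_synonym mat3 = "real^3^3"

definition e1 :: vec3 where "e1 = axis 1 1"
definition e2 :: vec3 where "e2 = axis 2 1"
definition e3 :: vec3 where "e3 = axis 3 1"

text \<open>The Lie bracket of r'_{3,a}: the bilinear, antisymmetric extension of
  [e1,e2] = a e2 - e3, [e1,e3] = e2 + a e3, [e2,e3] = 0.\<close>
definition br :: "real \<Rightarrow> vec3 \<Rightarrow> vec3 \<Rightarrow> vec3" where
  "br a x y =
     (x$1 * y$2 - x$2 * y$1) *\<^sub>R (a *\<^sub>R e2 - e3)
   + (x$1 * y$3 - x$3 * y$1) *\<^sub>R (e2 + a *\<^sub>R e3)"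

definition Aut :: "real \<Rightarrow> mat3 set" where
  "Aut a = {\<phi>. invertible \<phi> \<and>
             (\<forall>x y. \<phi> *v br a x y = br a (\<phi> *v x) (\<phi> *v y))}"

definition RAut :: "real \<Rightarrow> mat3 set" where
  "RAut a = {c *\<^sub>R \<phi> | c \<phi>. c \<noteq> 0 \<and> \<phi> \<in> Aut a}"

text \<open>Inner products on R^3, represented by their Gram matrices P,
  i.e. <x,y>_P = x . (P y).  This is the space GL_3(R)/O(3).\<close>
definition PD :: "mat3 set" where
  "PD = {P. transpose P = P \<and> (\<forall>x. x \<noteq> 0 \<longrightarrow> x \<bullet> (P *v x) > 0)}"

text \<open>Symmetric matrices: the ambient vector space containing PD as an open subset.\<close>
definition Sym :: "mat3 set" where
  "Sym = {X. transpose X = X}"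

text \<open>g.<.,.> = <g^{-1}.,g^{-1}.>, in Gram matrix form.\<close>
definition act :: "mat3 \<Rightarrow> mat3 \<Rightarrow> mat3" where
  "act g P = transpose (matrix_inv g) ** P ** matrix_inv g"

definition orbit :: "real \<Rightarrow> mat3 \<Rightarrow> mat3 set" where
  "orbit a P = {act g P | g. g \<in> RAut a}"

text \<open>The natural GL_3(R)-invariant Riemannian metric on PD (corresponding to
  tr(XY) on sym(3)): g_P(V,W) = 1/4 tr(P^{-1} V P^{-1} W).\<close>
definition gmet :: "mat3 \<Rightarrow> mat3 \<Rightarrow> mat3 \<Rightarrow> real" where
  "gmet P V W = trace (matrix_inv P ** V ** matrix_inv P ** W) / 4"

text \<open>Covariant acceleration (Levi-Civita connection of gmet) of a curve
  with position P, velocity V and ordinary second derivative A: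
  D_t gamma' = gamma'' - gamma' gamma^{-1} gamma'.\<close>
definition cov_acc :: "mat3 \<Rightarrow> mat3 \<Rightarrow> mat3 \<Rightarrow> mat3" where
  "cov_acc P V A = A - V ** matrix_inv P ** V"

text \<open>Tangent space at Q of a subset S (used for the orbits, which are embedded
  submanifolds): span of velocities of curves in S through Q.\<close>
definition tangent_space :: "mat3 set \<Rightarrow> mat3 \<Rightarrow> mat3 set" where
  "tangent_space S Q = span {v. \<exists>\<gamma>. (\<forall>t. \<gamma> t \<in> S) \<and> \<gamma> 0 = Q \<and>
                                  (\<gamma> has_vector_derivative v) (at 0)}"

definition orbit_dim :: "real \<Rightarrow> mat3 \<Rightarrow> nat" where
  "orbit_dim a P = dim (tangent_space (orbit a P) P)"

definition max_orbit_dim :: "real \<Rightarrow> nat" where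
  "max_orbit_dim a = Max {orbit_dim a P | P. P \<in> PD}"

definition regular_orbit :: "real \<Rightarrow> mat3 \<Rightarrow> bool" where
  "regular_orbit a P \<longleftrightarrow> orbit_dim a P = max_orbit_dim a"

definition singular_orbit :: "real \<Rightarrow> mat3 \<Rightarrow> bool" where
  "singular_orbit a P \<longleftrightarrow> orbit_dim a P < max_orbit_dim a"

definition cohomogeneity_one :: "real \<Rightarrow> bool" where
  "cohomogeneity_one a \<longleftrightarrow> max_orbit_dim a + 1 = dim Sym"

text \<open>Minimality of a submanifold S of PD: the mean curvature vector vanishes at
  every point Q, i.e. for every g_Q-orthonormal basis E_0..E_{k-1} of T_Q S and
  every choice of C^2 curves gamma_i in S with gamma_i(0) = Q, gamma_i'(0) = E_i,
  the normal component of sum_i (D_t gamma_i')(0) vanishes, i.e. this sum lies in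
  T_Q S.\<close>
definition minimal_submfd :: "mat3 set \<Rightarrow> bool" where
  "minimal_submfd S \<longleftrightarrow>
    (\<forall>Q \<in> S. \<forall>(E :: nat \<Rightarrow> mat3) (\<gamma> :: nat \<Rightarrow> real \<Rightarrow> mat3)
        (\<gamma>' :: nat \<Rightarrow> real \<Rightarrow> mat3) (A :: nat \<Rightarrow> mat3).
      let T = tangent_space S Q; k = dim T in
      ((\<forall>i<k. E i \<in> T) \<and> span (E ` {..<k}) = T \<and>
       (\<forall>i<k. \<forall>j<k. gmet Q (E i) (E j) = (if i = j then 1 else 0)) \<and>
       (\<forall>i<k. (\<forall>t. \<gamma> i t \<in> S) \<and> \<gamma> i 0 = Q \<and>
              (\<forall>t. (\<gamma> i has_vector_derivative \<gamma>' i t) (at t)) \<and>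
              \<gamma>' i 0 = E i \<and>
              (\<gamma>' i has_vector_derivative A i) (at 0)))
      \<longrightarrow> (\<Sum>i<k. cov_acc Q (E i) (A i)) \<in> T)"

end

theory Submission
  imports Defs
begin


lemma minv: assumes "invertible (A::mat3)"
  shows "A ** matrix_inv A = mat 1" "matrix_inv A ** A = mat 1"
proof -
  from assms obtain B where "A ** B = mat 1 \<and> B ** A = mat 1" unfolding invertible_def by blast
  hence "A ** matrix_inv A = mat 1 \<and> matrix_inv A ** A = mat 1"
    unfolding matrix_inv_def by (rule someI)
  thus "A ** matrix_inv A = mat 1" "matrix_inv A ** A = mat 1" by auto
qed

lemma minv_unique: assumes "(A::mat3) ** B = mat 1" "B ** A = mat 1"
  shows "matrix_inv A = B"
proof -
  have inv: "invertible A" using assms unfolding invertible_def by blast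
  have "matrix_inv A = matrix_inv A ** (A ** B)" using assms by simp
  also have "\<dots> = B" by (simp add: matrix_mul_assoc minv[OF inv])
  finally show ?thesis .
qed

lemma minv_inv: assumes "invertible (A::mat3)" shows "invertible (matrix_inv A)" "matrix_inv (matrix_inv A) = A"
  using minv[OF assms] minv_unique[of "matrix_inv A" A] unfolding invertible_def by auto

lemma minv_mult: assumes "invertible (A::mat3)" "invertible (B::mat3)"
  shows "invertible (A ** B)" "matrix_inv (A ** B) = matrix_inv B ** matrix_inv A"
proof -
  have "(A ** B) ** (matrix_inv B ** matrix_inv A) = A ** ((B ** matrix_inv B) ** matrix_inv A)"
    by (simp only: matrix_mul_assoc)
  also have "\<dots> = mat 1" using minv[OF assms(1)] minv[OF assms(2)] by simp
  finally have 1: "(A ** B) ** (matrix_inv B ** matrix_inv A) = mat 1" .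
  have "(matrix_inv B ** matrix_inv A) ** (A ** B) = matrix_inv B ** ((matrix_inv A ** A) ** B)"
    by (simp only: matrix_mul_assoc)
  also have "\<dots> = mat 1" using minv[OF assms(1)] minv[OF assms(2)] by simp
  finally have 2: "(matrix_inv B ** matrix_inv A) ** (A ** B) = mat 1" .
  show "invertible (A ** B)" using 1 2 unfolding invertible_def by blast
  show "matrix_inv (A ** B) = matrix_inv B ** matrix_inv A" using minv_unique[OF 1 2] .
qed

lemma minv_id: "matrix_inv (mat 1 :: mat3) = mat 1" by (rule minv_unique) simp_all
lemma inv_id: "invertible (mat 1 :: mat3)" unfolding invertible_def by (intro exI[of _ "mat 1"]) simp

lemma act_comp: assumes "invertible g" "invertible h"
  shows "act (g ** h) X = act g (act h X)"
  unfolding act_def using minv_mult[OF assms]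
  by (simp add: matrix_transpose_mul matrix_mul_assoc)

lemma act_id: "act (mat 1) X = X" unfolding act_def by (simp add: minv_id)

lemma act_inv: assumes "invertible g" shows "act (matrix_inv g) (act g X) = X" "act g (act (matrix_inv g) X) = X"
  using act_comp[OF minv_inv(1)[OF assms] assms, of X] act_comp[OF assms minv_inv(1)[OF assms], of X]
     minv[OF assms] act_id by auto

lemma Aut_mult: assumes "\<phi> \<in> Aut a" "\<psi> \<in> Aut a" shows "\<phi> ** \<psi> \<in> Aut a"
proof -
  have "invertible \<phi>" "invertible \<psi>" using assms unfolding Aut_def by auto
  hence "invertible (\<phi> ** \<psi>)" using minv_mult(1) by blast
  moreover have "(\<phi> ** \<psi>) *v br a x y = br a ((\<phi> ** \<psi>) *v x) ((\<phi> ** \<psi>) *v y)" for x y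
    using assms unfolding Aut_def by (simp add: matrix_vector_mul_assoc[symmetric])
  ultimately show ?thesis unfolding Aut_def by blast
qed

lemma Aut_inv: assumes "\<phi> \<in> Aut a" shows "matrix_inv \<phi> \<in> Aut a"
proof -
  have i: "invertible \<phi>" and b: "\<And>x y. \<phi> *v br a x y = br a (\<phi> *v x) (\<phi> *v y)" using assms unfolding Aut_def by auto
  let ?p = "matrix_inv \<phi>"
  have pp: "\<And>x. \<phi> *v (?p *v x) = x" "\<And>x. ?p *v (\<phi> *v x) = x" using minv[OF i] by (simp_all add: matrix_vector_mul_assoc)
  have "?p *v br a x y = br a (?p *v x) (?p *v y)" for x y
  proof -
    have "?p *v br a x y = ?p *v br a (\<phi> *v (?p *v x)) (\<phi> *v (?p *v y))" by (simp only: pp)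
    also have "\<dots> = ?p *v (\<phi> *v br a (?p *v x) (?p *v y))" by (simp only: b)
    also have "\<dots> = br a (?p *v x) (?p *v y)" by (simp only: pp)
    finally show ?thesis .
  qed
  thus ?thesis using minv_inv[OF i] unfolding Aut_def by auto
qed

lemma Aut_id: "mat 1 \<in> Aut a" unfolding Aut_def using inv_id by simp

lemma RAut_mult: assumes "g \<in> RAut a" "h \<in> RAut a" shows "g ** h \<in> RAut a"
proof -
  obtain c \<phi> where 1: "g = c *\<^sub>R \<phi>" "c \<noteq> 0" "\<phi> \<in> Aut a"
    using assms(1) unfolding RAut_def by blast
  obtain d \<psi> where 2: "h = d *\<^sub>R \<psi>" "d \<noteq> 0" "\<psi> \<in> Aut a"
    using assms(2) unfolding RAut_def by blast
  have "g ** h = (c*d) *\<^sub>R (\<phi> ** \<psi>)" unfolding 1(1) 2(1)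
    by (simp add: vec_eq_iff matrix_matrix_mult_def sum_distrib_left mult_ac)
  moreover have "c * d \<noteq> 0" using 1 2 by simp
  moreover have "\<phi> ** \<psi> \<in> Aut a" using Aut_mult 1 2 by blast
  ultimately show ?thesis unfolding RAut_def by blast
qed

lemma RAut_invertible: "g \<in> RAut a \<Longrightarrow> invertible g"
  unfolding RAut_def Aut_def by (auto intro: scalar_invertible)

lemma RAut_inv: assumes "g \<in> RAut a" shows "matrix_inv g \<in> RAut a"
proof -
  obtain c \<phi> where g: "g = c *\<^sub>R \<phi>" "c \<noteq> 0" "\<phi> \<in> Aut a"
    using assms unfolding RAut_def by auto
  have i: "invertible \<phi>" using g unfolding Aut_def by auto
  have "matrix_inv g = (1/c) *\<^sub>R matrix_inv \<phi>"
    using g minv[OF i] by (intro minv_unique) (simp_all add: matrix_scalar_ac scalar_matrix_assoc[symmetric])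
  moreover have "1/c \<noteq> 0" using g by simp
  ultimately show ?thesis using g Aut_inv unfolding RAut_def by blast
qed

lemma RAut_id: "mat 1 \<in> RAut a"
  unfolding RAut_def mem_Collect_eq
  apply (rule exI[of _ "1::real"], rule exI[of _ "mat 1"]) using Aut_id by simp

lemma orbit_sub: assumes "Q \<in> orbit a P" shows "orbit a Q = orbit a P"
proof -
  obtain h where h: "h \<in> RAut a" "Q = act h P" using assms unfolding orbit_def by auto
  have ih: "invertible h" using h RAut_invertible by auto
  show ?thesis
  proof
    show "orbit a Q \<subseteq> orbit a P"
    proof
      fix X assume "X \<in> orbit a Q"
      then obtain g where g: "g \<in> RAut a" "X = act g Q" unfolding orbit_def by auto
      have "X = act (g ** h) P" using g h act_comp[OF RAut_invertible[OF g(1)] RAut_invertible[OF h(1)]] by simp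
      thus "X \<in> orbit a P" unfolding orbit_def mem_Collect_eq using RAut_mult[OF g(1) h(1)] by blast
    qed
    show "orbit a P \<subseteq> orbit a Q"
    proof
      fix X assume "X \<in> orbit a P"
      then obtain g where g: "g \<in> RAut a" "X = act g P" unfolding orbit_def by auto
      have "act (g ** matrix_inv h) Q = act g (act (matrix_inv h) (act h P))"
        using h(2) act_comp[OF RAut_invertible[OF g(1)] RAut_invertible[OF RAut_inv[OF h(1)]]] by simp
      hence "X = act (g ** matrix_inv h) Q" using g act_inv(1)[OF ih] by simp
      thus "X \<in> orbit a Q" unfolding orbit_def mem_Collect_eq using RAut_mult[OF g(1) RAut_inv[OF h(1)]] by blast
    qed
  qed
qed

lemma self_orbit: "P \<in> orbit a P" unfolding orbit_def mem_Collect_eq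
  by (intro exI[of _ "mat 1"]) (simp add: act_id RAut_id)

lemma orbit_transpose: assumes "h \<in> RAut a" shows "transpose h ** P ** h \<in> orbit a P"
proof -
  have "act (matrix_inv h) P = transpose h ** P ** h"
    unfolding act_def using minv_inv(2)[OF RAut_invertible[OF assms]] by simp
  thus ?thesis unfolding orbit_def mem_Collect_eq
    using RAut_inv[OF assms] by (intro exI[of _ "matrix_inv h"]) simp
qed



lemma br_comp: "br a x y $ 1 = 0"
  "br a x y $ 2 = (x$1 * y$2 - x$2 * y$1) * a + (x$1 * y$3 - x$3 * y$1)"
  "br a x y $ 3 = - (x$1 * y$2 - x$2 * y$1) + (x$1 * y$3 - x$3 * y$1) * a"
  unfolding br_def e2_def e3_def by (simp_all add: axis_def)

lemma mv3: "((A::mat3) *v x) $ i = A$i$1 * x$1 + A$i$2 * x$2 + A$i$3 * x$3"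
  by (simp add: matrix_vector_mult_def sum_3)

lemma e_comp: "e1$1 = 1" "e1$2 = 0" "e1$3 = 0" "e2$1 = 0" "e2$2 = 1" "e2$3 = 0" "e3$1 = 0" "e3$2 = 0" "e3$3 = 1"
  unfolding e1_def e2_def e3_def by (simp_all add: axis_def)

lemma inv_col2: assumes "invertible (A::mat3)" shows "A$1$2 \<noteq> 0 \<or> A$2$2 \<noteq> 0 \<or> A$3$2 \<noteq> 0"
proof (rule ccontr)
  assume H: "\<not> (A$1$2 \<noteq> 0 \<or> A$2$2 \<noteq> 0 \<or> A$3$2 \<noteq> 0)"
  obtain B where "B ** A = mat 1" using assms unfolding invertible_def by blast
  hence "(B ** A)$2$2 = 1" by (simp add: mat_def)
  thus False using H by (simp add: matrix_matrix_mult_def sum_3)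
qed

lemma inv_row1: assumes "invertible (A::mat3)" shows "A$1$1 \<noteq> 0 \<or> A$1$2 \<noteq> 0 \<or> A$1$3 \<noteq> 0"
proof (rule ccontr)
  assume H: "\<not> (A$1$1 \<noteq> 0 \<or> A$1$2 \<noteq> 0 \<or> A$1$3 \<noteq> 0)"
  obtain B where "A ** B = mat 1" using assms unfolding invertible_def by blast
  hence "(A ** B)$1$1 = 1" by (simp add: mat_def)
  thus False using H by (simp add: matrix_matrix_mult_def sum_3)
qed

lemma Aut_struct:
  assumes "\<phi> \<in> Aut a"
  shows "\<phi>$1$2 = 0 \<and> \<phi>$1$3 = 0 \<and> \<phi>$1$1 \<noteq> 0 \<and> (\<phi>$1$1)^2 = 1 \<and>
         \<phi>$2$3 = - \<phi>$1$1 * \<phi>$3$2 \<and> \<phi>$3$3 = \<phi>$1$1 * \<phi>$2$2 \<and> (\<phi>$2$2 \<noteq> 0 \<or> \<phi>$3$2 \<noteq> 0)"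
proof -
  have inv: "invertible \<phi>" and b: "\<And>x y. \<phi> *v br a x y = br a (\<phi> *v x) (\<phi> *v y)"
    using assms unfolding Aut_def by auto
  have "(\<phi> *v br a e1 e2) $ k = (br a (\<phi> *v e1) (\<phi> *v e2)) $ k" for k using b by simp
  note q12 = this[of 1, unfolded br_comp mv3 e_comp] this[of 2, unfolded br_comp mv3 e_comp] this[of 3, unfolded br_comp mv3 e_comp]
  have "(\<phi> *v br a e1 e3) $ k = (br a (\<phi> *v e1) (\<phi> *v e3)) $ k" for k using b by simp
  note q13 = this[of 1, unfolded br_comp mv3 e_comp] this[of 3, unfolded br_comp mv3 e_comp] this[of 2, unfolded br_comp mv3 e_comp]
  have E1: "a * \<phi>$1$2 - \<phi>$1$3 = 0" using q12(1) by (simp add: mult.commute)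
  have E2: "\<phi>$1$2 + a * \<phi>$1$3 = 0" using q13(1) by (simp add: mult.commute)
  have z2: "\<phi>$1$2 = 0"
  proof -
    have "(a^2+1) * \<phi>$1$2 = 0" using E1 E2 by algebra
    moreover have "0 \<le> a^2" by simp
    hence "a^2 + 1 \<noteq> 0" by linarith
    ultimately show ?thesis by simp
  qed
  have z3: "\<phi>$1$3 = 0" using E1 z2 by simp
  define c where "c = \<phi>$1$1"
  define m11 where "m11 = \<phi>$2$2"
  define m21 where "m21 = \<phi>$3$2"
  define m12 where "m12 = \<phi>$2$3"
  define m22 where "m22 = \<phi>$3$3"
  have c0: "c \<noteq> 0" using inv_row1[OF inv] z2 z3 unfolding c_def by simp
  have mm: "m11 \<noteq> 0 \<or> m21 \<noteq> 0" using inv_col2[OF inv] z2 unfolding m11_def m21_def by simp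
  have r1: "a * m11 - m12 = c * (a * m11 + m21)" using q12(2) z2 z3 unfolding c_def m11_def m12_def m21_def m22_def by algebra
  have r2: "a * m21 - m22 = c * (- m11 + a * m21)" using q12(3) z2 z3 unfolding c_def m11_def m12_def m21_def m22_def by algebra
  have r3: "m11 + a * m12 = c * (a * m12 + m22)" using q13(3) z2 z3 unfolding c_def m11_def m12_def m21_def m22_def by algebra
  have r4: "m21 + a * m22 = c * (- m12 + a * m22)" using q13(2) z2 z3 unfolding c_def m11_def m12_def m21_def m22_def by algebra
  define al where "al = a * (1 - c)"
  have s12: "m12 = al * m11 - c * m21" using r1 unfolding al_def by algebra
  have s22: "m22 = al * m21 + c * m11" using r2 unfolding al_def by algebra
  define K where "K = 1 - c^2 + al^2"
  define Lc where "Lc = 2 * al * c"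
  have k1: "K * m11 = Lc * m21" using r3 s12 s22 unfolding K_def Lc_def al_def by algebra
  have k2: "K * m21 = - Lc * m11" using r4 s12 s22 unfolding K_def Lc_def al_def by algebra
  have "(K^2 + Lc^2) * m11 = 0" "(K^2 + Lc^2) * m21 = 0"
    using k1 k2 by algebra+
  hence "K^2 + Lc^2 = 0" using mm by auto
  hence "K = 0" "Lc = 0" by (simp_all add: sum_power2_eq_zero_iff)
  hence "al = 0" using c0 unfolding Lc_def by simp
  hence cc: "c^2 = 1" using \<open>K = 0\<close> unfolding K_def by simp
  show ?thesis using z2 z3 c0 cc mm s12 s22 \<open>al = 0\<close>
    unfolding c_def m11_def m12_def m21_def m22_def by simp
qed



definition M3 :: "real \<Rightarrow> real \<Rightarrow> real \<Rightarrow> real \<Rightarrow> real \<Rightarrow> real \<Rightarrow> real \<Rightarrow> real \<Rightarrow> real \<Rightarrow> mat3" where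
  "M3 a11 a12 a13 a21 a22 a23 a31 a32 a33 = vector [vector [a11,a12,a13], vector [a21,a22,a23], vector [a31,a32,a33]]"

lemma M3_nth[simp]:
  "M3 a11 a12 a13 a21 a22 a23 a31 a32 a33 $ 1 $ 1 = a11"
  "M3 a11 a12 a13 a21 a22 a23 a31 a32 a33 $ 1 $ 2 = a12"
  "M3 a11 a12 a13 a21 a22 a23 a31 a32 a33 $ 1 $ 3 = a13"
  "M3 a11 a12 a13 a21 a22 a23 a31 a32 a33 $ 2 $ 1 = a21"
  "M3 a11 a12 a13 a21 a22 a23 a31 a32 a33 $ 2 $ 2 = a22"
  "M3 a11 a12 a13 a21 a22 a23 a31 a32 a33 $ 2 $ 3 = a23"
  "M3 a11 a12 a13 a21 a22 a23 a31 a32 a33 $ 3 $ 1 = a31"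
  "M3 a11 a12 a13 a21 a22 a23 a31 a32 a33 $ 3 $ 2 = a32"
  "M3 a11 a12 a13 a21 a22 a23 a31 a32 a33 $ 3 $ 3 = a33"
  unfolding M3_def by simp_all

lemma mat3_eq: "(A::mat3) = B \<longleftrightarrow> (A$1$1 = B$1$1 \<and> A$1$2 = B$1$2 \<and> A$1$3 = B$1$3 \<and>
   A$2$1 = B$2$1 \<and> A$2$2 = B$2$2 \<and> A$2$3 = B$2$3 \<and> A$3$1 = B$3$1 \<and> A$3$2 = B$3$2 \<and> A$3$3 = B$3$3)"
  by (auto simp: vec_eq_iff forall_3)

lemma mm3: "((A::mat3) ** B) $ i $ j = A$i$1 * B$1$j + A$i$2 * B$2$j + A$i$3 * B$3$j"
  by (simp add: matrix_matrix_mult_def sum_3)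

lemma mat1_nth: "(mat 1 :: mat3) $ i $ j = (if i = j then 1 else 0)"
  by (simp add: mat_def)

lemma tr3: "transpose (A::mat3) $ i $ j = A $ j $ i" by (simp add: transpose_def)

lemma num3_neq[simp]: "(1::3) \<noteq> 2" "(1::3) \<noteq> 3" "(2::3) \<noteq> 3" "(2::3) \<noteq> 1" "(3::3) \<noteq> 1" "(3::3) \<noteq> 2"
  by simp_all

definition good :: "mat3 \<Rightarrow> bool" where
  "good N \<longleftrightarrow> N$1$2 = 0 \<and> N$1$3 = 0 \<and> N$1$1 \<noteq> 0 \<and>
     (\<exists>\<epsilon>. \<epsilon>^2 = 1 \<and> N$2$3 = - \<epsilon> * N$3$2 \<and> N$3$3 = \<epsilon> * N$2$2) \<and> (N$2$2 \<noteq> 0 \<or> N$3$2 \<noteq> 0)"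

lemma RAut_good: assumes "g \<in> RAut a" shows "good g"
proof -
  obtain c \<phi> where g: "g = c *\<^sub>R \<phi>" "c \<noteq> 0" "\<phi> \<in> Aut a" using assms unfolding RAut_def by blast
  note s = Aut_struct[OF g(3)]
  show ?thesis unfolding good_def g(1) using s g(2)
    by (auto intro!: exI[of _ "\<phi>$1$1"])
qed

definition F :: "real \<Rightarrow> real \<Rightarrow> real \<Rightarrow> real \<Rightarrow> mat3" where
  "F w2 w3 p q = M3 1 0 0 w2 p (-q) w3 q p"

lemma F_inv: assumes "p^2 + q^2 \<noteq> 0"
  shows "F w2 w3 p q ** F (-(p*w2 + q*w3)/(p^2+q^2)) (-(-q*w2 + p*w3)/(p^2+q^2)) (p/(p^2+q^2)) (-q/(p^2+q^2)) = mat 1"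
        "F (-(p*w2 + q*w3)/(p^2+q^2)) (-(-q*w2 + p*w3)/(p^2+q^2)) (p/(p^2+q^2)) (-q/(p^2+q^2)) ** F w2 w3 p q = mat 1"
  using assms unfolding mat3_eq mm3 F_def by (simp_all add: mat1_nth field_simps power2_eq_square, algebra+)

lemma F_Aut: assumes "p^2 + q^2 \<noteq> 0" shows "F w2 w3 p q \<in> Aut a"
proof -
  have "invertible (F w2 w3 p q)" using F_inv[OF assms] unfolding invertible_def by blast
  moreover have "F w2 w3 p q *v br a x y = br a (F w2 w3 p q *v x) (F w2 w3 p q *v y)" for x y
    unfolding vec_eq_iff forall_3 mv3 br_comp by (simp add: F_def br_comp) algebra
  ultimately show ?thesis unfolding Aut_def by blast
qed

lemma F_RAut: assumes "p^2 + q^2 \<noteq> 0" "c \<noteq> 0" shows "c *\<^sub>R F w2 w3 p q \<in> RAut a"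
  unfolding RAut_def using F_Aut[OF assms(1)] assms(2) by blast

lemma F_RAut1: assumes "p^2 + q^2 \<noteq> 0" shows "F w2 w3 p q \<in> RAut a"
  using F_RAut[OF assms, of 1] by simp



definition inL :: "mat3 \<Rightarrow> bool" where
  "inL X \<longleftrightarrow> X$2$2 = X$3$3 \<and> X$2$3 = 0 \<and> X$3$2 = 0"

definition dB :: "mat3 \<Rightarrow> real" where "dB X = X$2$2 * X$3$3 - X$2$3 * X$3$2"
definition tB :: "mat3 \<Rightarrow> real" where "tB X = X$2$2 + X$3$3"

lemma good_formulas:
  assumes "good N"
  shows "\<exists>\<epsilon> n m. \<epsilon>^2 = 1 \<and> n^2 + m^2 \<noteq> 0 \<and>
    (transpose N ** P ** N)$2$2 = n^2 * P$2$2 + n*m*(P$2$3 + P$3$2) + m^2 * P$3$3 \<and>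
    (transpose N ** P ** N)$3$3 = m^2 * P$2$2 - n*m*(P$2$3 + P$3$2) + n^2 * P$3$3 \<and>
    (transpose N ** P ** N)$2$3 = \<epsilon> * (- n*m*P$2$2 + n^2 * P$2$3 - m^2 * P$3$2 + n*m*P$3$3) \<and>
    (transpose N ** P ** N)$3$2 = \<epsilon> * (- n*m*P$2$2 + n^2 * P$3$2 - m^2 * P$2$3 + n*m*P$3$3)"
proof -
  obtain \<epsilon> where e: "\<epsilon>^2 = 1" "N$2$3 = - \<epsilon> * N$3$2" "N$3$3 = \<epsilon> * N$2$2"
    and z: "N$1$2 = 0" "N$1$3 = 0" and nz: "N$2$2 \<noteq> 0 \<or> N$3$2 \<noteq> 0"
    using assms unfolding good_def by blast
  have "(N$2$2)^2 + (N$3$2)^2 \<noteq> 0" using nz by (auto simp: sum_power2_eq_zero_iff)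
  moreover have "(transpose N ** P ** N)$2$2 = (N$2$2)^2 * P$2$2 + N$2$2*N$3$2*(P$2$3 + P$3$2) + (N$3$2)^2 * P$3$3"
    unfolding mm3 tr3 z e by (simp add: power2_eq_square algebra_simps)
  moreover have "(transpose N ** P ** N)$3$3 = (N$3$2)^2 * P$2$2 - N$2$2*N$3$2*(P$2$3 + P$3$2) + (N$2$2)^2 * P$3$3"
    unfolding mm3 tr3 z e using e(1) by (simp add: power2_eq_square algebra_simps) algebra
  moreover have "(transpose N ** P ** N)$2$3 = \<epsilon> * (- N$2$2*N$3$2*P$2$2 + (N$2$2)^2 * P$2$3 - (N$3$2)^2 * P$3$2 + N$2$2*N$3$2*P$3$3)"
    unfolding mm3 tr3 z e by (simp add: power2_eq_square algebra_simps)
  moreover have "(transpose N ** P ** N)$3$2 = \<epsilon> * (- N$2$2*N$3$2*P$2$2 + (N$2$2)^2 * P$3$2 - (N$3$2)^2 * P$2$3 + N$2$2*N$3$2*P$3$3)"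
    unfolding mm3 tr3 z e by (simp add: power2_eq_square algebra_simps)
  ultimately show ?thesis using e(1) by blast
qed

lemma good_inL: assumes "good N" "inL P" shows "inL (transpose N ** P ** N)"
  using good_formulas[OF assms(1), of P] assms(2) unfolding inL_def by (auto simp: algebra_simps)

lemma good_inv: assumes "good N" "transpose P = P"
  shows "dB (transpose N ** P ** N) * (tB P)^2 = dB P * (tB (transpose N ** P ** N))^2"
proof -
  have s: "P$3$2 = P$2$3" using assms(2) by (metis tr3)
  obtain \<epsilon> n m where "\<epsilon>^2 = 1"
    "(transpose N ** P ** N)$2$2 = n^2 * P$2$2 + n*m*(P$2$3 + P$3$2) + m^2 * P$3$3"
    "(transpose N ** P ** N)$3$3 = m^2 * P$2$2 - n*m*(P$2$3 + P$3$2) + n^2 * P$3$3"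
    "(transpose N ** P ** N)$2$3 = \<epsilon> * (- n*m*P$2$2 + n^2 * P$2$3 - m^2 * P$3$2 + n*m*P$3$3)"
    "(transpose N ** P ** N)$3$2 = \<epsilon> * (- n*m*P$2$2 + n^2 * P$3$2 - m^2 * P$2$3 + n*m*P$3$3)"
    using good_formulas[OF assms(1), of P] by blast
  thus ?thesis unfolding dB_def tB_def s by algebra
qed

lemma sym_congr: assumes "transpose P = P" shows "transpose (transpose N ** P ** N) = transpose N ** P ** (N::mat3)"
  using assms by (simp add: matrix_transpose_mul matrix_mul_assoc)

lemma act_good: assumes "g \<in> RAut a" shows "good (matrix_inv g)" "act g P = transpose (matrix_inv g) ** P ** matrix_inv g"
  using RAut_good[OF RAut_inv[OF assms]] unfolding act_def by auto

lemma orbit_sym: assumes "transpose P = P" "Q \<in> orbit a P" shows "transpose Q = Q"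
  using assms act_good sym_congr unfolding orbit_def by auto

lemma orbit_inL: assumes "inL P" "Q \<in> orbit a P" shows "inL Q"
  using assms act_good good_inL unfolding orbit_def by auto

lemma orbit_inv: assumes "transpose P = P" "Q \<in> orbit a P" shows "dB Q * (tB P)^2 = dB P * (tB Q)^2"
  using assms act_good good_inv unfolding orbit_def by auto



definition gens :: "mat3 set \<Rightarrow> mat3 \<Rightarrow> mat3 set" where
  "gens S Q = {v. \<exists>\<gamma>. (\<forall>t. \<gamma> t \<in> S) \<and> \<gamma> 0 = Q \<and> (\<gamma> has_vector_derivative v) (at 0)}"

lemma TS_gens: "tangent_space S Q = span (gens S Q)"
  unfolding tangent_space_def gens_def by simp

lemma TS_mem: assumes "\<forall>t. \<gamma> t \<in> S" "\<gamma> 0 = Q" "(\<gamma> has_vector_derivative v) (at 0)"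
  shows "v \<in> tangent_space S Q"
  unfolding TS_gens by (rule span_base) (use assms in \<open>auto simp: gens_def\<close>)

lemma TS_sub: assumes "\<And>v \<gamma>. \<forall>t. \<gamma> t \<in> S \<Longrightarrow> \<gamma> 0 = Q \<Longrightarrow> (\<gamma> has_vector_derivative v) (at 0) \<Longrightarrow> v \<in> K"
  "subspace K" shows "tangent_space S Q \<subseteq> K"
  unfolding TS_gens by (rule span_minimal) (use assms in \<open>auto simp: gens_def\<close>)

lemma linear_sandwich: "linear (\<lambda>X::mat3. (A::mat3) ** X ** (B::mat3))"
  proof (rule linearI)
  fix X Y :: mat3 and r :: real
  show "A ** (X + Y) ** B = A ** X ** B + A ** Y ** B" unfolding mat3_eq by (simp only: vector_add_component vector_scaleR_component mm3 real_scaleR_def; intro conjI; algebra)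
  show "A ** (r *\<^sub>R X) ** B = r *\<^sub>R (A ** X ** B)" unfolding mat3_eq by (simp only: vector_add_component vector_scaleR_component mm3 real_scaleR_def; intro conjI; algebra)
qed

lemma bl_sandwich: "bounded_linear (\<lambda>X::mat3. (A::mat3) ** X ** (B::mat3))"
  using linear_sandwich linear_conv_bounded_linear by blast

lemma linear_act: "linear (act g)"
  unfolding act_def by (rule linear_sandwich)

lemma bl_act: "bounded_linear (act g)"
  unfolding act_def by (rule bl_sandwich)

lemma TS_act_sub: assumes "g \<in> RAut a" "Q \<in> orbit a P"
  shows "act g ` tangent_space (orbit a P) Q \<subseteq> tangent_space (orbit a P) (act g Q)"
proof -
  have "act g ` gens (orbit a P) Q \<subseteq> gens (orbit a P) (act g Q)"
  proof
    fix w assume "w \<in> act g ` gens (orbit a P) Q"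
    then obtain v \<gamma> where w: "w = act g v" "\<forall>t. \<gamma> t \<in> orbit a P" "\<gamma> 0 = Q" "(\<gamma> has_vector_derivative v) (at 0)"
      unfolding gens_def by blast
    have "\<forall>t. act g (\<gamma> t) \<in> orbit a P"
    proof
      fix t
      have "act g (\<gamma> t) \<in> orbit a (\<gamma> t)" unfolding orbit_def using assms(1) by blast
      thus "act g (\<gamma> t) \<in> orbit a P" using orbit_sub[of "\<gamma> t" a P] w(2) by simp
    qed
    moreover have "((\<lambda>t. act g (\<gamma> t)) has_vector_derivative act g v) (at 0)"
      by (rule bounded_linear.has_vector_derivative[OF bl_act w(4)])
    ultimately show "w \<in> gens (orbit a P) (act g Q)" unfolding gens_def using w by auto
  qed
  hence "span (act g ` gens (orbit a P) Q) \<subseteq> tangent_space (orbit a P) (act g Q)"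
    unfolding TS_gens by (rule span_mono)
  thus ?thesis unfolding TS_gens span_linear_image[OF linear_act] .
qed

lemma TS_act: assumes "g \<in> RAut a" "Q \<in> orbit a P"
  shows "tangent_space (orbit a P) (act g Q) = act g ` tangent_space (orbit a P) Q"
proof
  show "act g ` tangent_space (orbit a P) Q \<subseteq> tangent_space (orbit a P) (act g Q)"
    by (rule TS_act_sub[OF assms])
  have ig: "invertible g" using RAut_invertible[OF assms(1)] .
  have Q': "act g Q \<in> orbit a P"
    using assms orbit_sub[of Q a P] unfolding orbit_def by blast
  have "act (matrix_inv g) ` tangent_space (orbit a P) (act g Q) \<subseteq> tangent_space (orbit a P) Q"
    using TS_act_sub[OF RAut_inv[OF assms(1)] Q'] act_inv(1)[OF ig] by simp
  hence "act g ` act (matrix_inv g) ` tangent_space (orbit a P) (act g Q) \<subseteq> act g ` tangent_space (orbit a P) Q"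
    by (rule image_mono)
  moreover have "act g ` act (matrix_inv g) ` T = T" for T
    using act_inv(2)[OF ig] by (auto simp: image_image)
  ultimately show "tangent_space (orbit a P) (act g Q) \<subseteq> act g ` tangent_space (orbit a P) Q" by simp
qed

lemma dim_act: assumes "invertible g" shows "dim (act g ` T) = dim T"
proof -
  have "dim (act g ` T) \<le> dim T" by (rule dim_image_le[OF linear_act])
  moreover have "dim (act (matrix_inv g) ` act g ` T) \<le> dim (act g ` T)" by (rule dim_image_le[OF linear_act])
  moreover have "act (matrix_inv g) ` act g ` T = T" using act_inv(1)[OF assms] by (auto simp: image_image)
  ultimately show ?thesis by simp
qed

lemma orbit_dim_eq: assumes "Q \<in> orbit a P" shows "orbit_dim a Q = orbit_dim a P"
proof -
  obtain g where g: "g \<in> RAut a" "Q = act g P" using assms unfolding orbit_def by blast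
  have "tangent_space (orbit a P) Q = act g ` tangent_space (orbit a P) P"
    using TS_act[OF g(1) self_orbit] g(2) by simp
  thus ?thesis unfolding orbit_dim_def orbit_sub[OF assms] using dim_act[OF RAut_invertible[OF g(1)]] by simp
qed



definition diag3 :: "real \<Rightarrow> real \<Rightarrow> real \<Rightarrow> mat3" where "diag3 d1 d2 d3 = M3 d1 0 0 0 d2 0 0 0 d3"
definition b11 :: mat3 where "b11 = M3 1 0 0 0 0 0 0 0 0"
definition b22 :: mat3 where "b22 = M3 0 0 0 0 1 0 0 0 0"
definition b33 :: mat3 where "b33 = M3 0 0 0 0 0 0 0 0 1"
definition s12 :: mat3 where "s12 = M3 0 1 0 1 0 0 0 0 0"
definition s13 :: mat3 where "s13 = M3 0 0 1 0 0 0 1 0 0"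
definition s23 :: mat3 where "s23 = M3 0 0 0 0 0 1 0 1 0"

lemmas mdefs = diag3_def b11_def b22_def b33_def s12_def s13_def s23_def

lemma comp_deriv: assumes "((\<gamma>::real \<Rightarrow> mat3) has_vector_derivative v) (at t)"
  shows "((\<lambda>s. \<gamma> s $ i $ j) has_real_derivative v $ i $ j) (at t)"
proof -
  have bl: "bounded_linear (\<lambda>X::mat3. X $ i $ j)"
    using bounded_linear_compose[OF bounded_linear_vec_nth[of j] bounded_linear_vec_nth[of i]] by simp
  show ?thesis using bounded_linear.has_vector_derivative[OF bl assms]
    by (simp add: has_real_derivative_iff_has_vector_derivative)
qed

lemma deriv_zero: assumes "\<And>s. (f::real\<Rightarrow>real) s = 0" "(f has_real_derivative d) (at t)" shows "d = 0"
proof -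
  have "f = (\<lambda>_. 0)" using assms(1) by auto
  hence "(f has_real_derivative 0) (at t)" by simp
  thus ?thesis using DERIV_unique assms(2) by blast
qed

lemma curve_deriv: "((\<lambda>t. D + t *\<^sub>R V + (t^2) *\<^sub>R W) has_vector_derivative (V + (2*x) *\<^sub>R W)) (at x)"
  by (auto intro!: derivative_eq_intros)

lemma curve_deriv2: "((\<lambda>t. V + (2*t) *\<^sub>R W) has_vector_derivative (2 *\<^sub>R W)) (at x)"
  by (auto intro!: derivative_eq_intros)



definition Vv :: "real \<Rightarrow> real \<Rightarrow> real \<Rightarrow> real \<Rightarrow> nat \<Rightarrow> mat3" where
  "Vv d1 d2 d3 s i = (if i = 0 then (s*d1) *\<^sub>R b11 else if i = 1 then s *\<^sub>R diag3 0 d2 d3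
     else if i = 2 then (s*d2) *\<^sub>R s12 else if i = 3 then (s*d3) *\<^sub>R s13 else (s*(d3-d2)) *\<^sub>R s23)"

definition Ww :: "real \<Rightarrow> real \<Rightarrow> real \<Rightarrow> real \<Rightarrow> nat \<Rightarrow> mat3" where
  "Ww d1 d2 d3 s i = (if i = 0 then (s^2*d1) *\<^sub>R b11 else if i = 1 then (s^2) *\<^sub>R diag3 0 d2 d3
     else if i = 2 then (s^2*d2) *\<^sub>R b11 else if i = 3 then (s^2*d3) *\<^sub>R b11 else (s^2) *\<^sub>R (d3 *\<^sub>R b22 + d2 *\<^sub>R b33))"

lemma qpos: "0 < 1 + s*t + s^2*t^2" for s t :: real
proof -
  have "0 \<le> (s*t + 1/2)^2" by simp
  thus ?thesis by (simp add: power2_eq_square algebra_simps)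
qed

lemma curve_orbit:
  assumes "i < 5"
  shows "diag3 d1 d2 d3 + t *\<^sub>R Vv d1 d2 d3 s i + (t^2) *\<^sub>R Ww d1 d2 d3 s i \<in> orbit a (diag3 d1 d2 d3)"
proof -
  define q where "q = 1 + s*t + s^2*t^2"
  have q: "q > 0" unfolding q_def by (rule qpos)
  have sq: "sqrt q * sqrt q = q" using q by simp
  have sq0: "sqrt q \<noteq> 0" using q by simp
  define u where "u = t * s"
  consider "i = 0" | "i = 1" | "i = 2" | "i = 3" | "i = 4" using assms by linarith
  thus ?thesis
  proof cases
    case 1
    let ?h = "sqrt q *\<^sub>R F 0 0 (1 / sqrt q) 0"
    have "?h \<in> RAut a" using F_RAut sq0 by simp
    moreover have "transpose ?h ** diag3 d1 d2 d3 ** ?h = diag3 d1 d2 d3 + t *\<^sub>R Vv d1 d2 d3 s i + (t^2) *\<^sub>R Ww d1 d2 d3 s i"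
      unfolding mat3_eq mm3 tr3 using 1 sq sq0 by (simp add: F_def mdefs Vv_def Ww_def q_def algebra_simps power2_eq_square)
    ultimately show ?thesis using orbit_transpose by metis
  next
    case 2
    let ?h = "F 0 0 (sqrt q) 0"
    have "?h \<in> RAut a" using F_RAut1 sq0 by simp
    moreover have "transpose ?h ** diag3 d1 d2 d3 ** ?h = diag3 d1 d2 d3 + t *\<^sub>R Vv d1 d2 d3 s i + (t^2) *\<^sub>R Ww d1 d2 d3 s i"
      unfolding mat3_eq mm3 tr3 using 2 sq sq0 by (simp add: F_def mdefs Vv_def Ww_def q_def algebra_simps power2_eq_square)
    ultimately show ?thesis using orbit_transpose by metis
  next
    case 3
    let ?h = "F u 0 1 0"
    have "?h \<in> RAut a" using F_RAut1 by simp
    moreover have "transpose ?h ** diag3 d1 d2 d3 ** ?h = diag3 d1 d2 d3 + t *\<^sub>R Vv d1 d2 d3 s i + (t^2) *\<^sub>R Ww d1 d2 d3 s i"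
      unfolding mat3_eq mm3 tr3 using 3 by (simp add: u_def F_def mdefs Vv_def Ww_def algebra_simps power2_eq_square)
    ultimately show ?thesis using orbit_transpose by metis
  next
    case 4
    let ?h = "F 0 u 1 0"
    have "?h \<in> RAut a" using F_RAut1 by simp
    moreover have "transpose ?h ** diag3 d1 d2 d3 ** ?h = diag3 d1 d2 d3 + t *\<^sub>R Vv d1 d2 d3 s i + (t^2) *\<^sub>R Ww d1 d2 d3 s i"
      unfolding mat3_eq mm3 tr3 using 4 by (simp add: u_def F_def mdefs Vv_def Ww_def algebra_simps power2_eq_square)
    ultimately show ?thesis using orbit_transpose by metis
  next
    case 5
    let ?h = "F 0 0 1 u"
    have "?h \<in> RAut a" using F_RAut1 by (simp add: add_pos_nonneg)
    moreover have "transpose ?h ** diag3 d1 d2 d3 ** ?h = diag3 d1 d2 d3 + t *\<^sub>R Vv d1 d2 d3 s i + (t^2) *\<^sub>R Ww d1 d2 d3 s i"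
      unfolding mat3_eq mm3 tr3 using 5 by (simp add: u_def F_def mdefs Vv_def Ww_def algebra_simps power2_eq_square)
    ultimately show ?thesis using orbit_transpose by metis
  qed
qed

lemma Vv_TS: assumes "i < 5"
  shows "Vv d1 d2 d3 s i \<in> tangent_space (orbit a (diag3 d1 d2 d3)) (diag3 d1 d2 d3)"
proof (rule TS_mem)
  show "\<forall>t. diag3 d1 d2 d3 + t *\<^sub>R Vv d1 d2 d3 s i + (t^2) *\<^sub>R Ww d1 d2 d3 s i \<in> orbit a (diag3 d1 d2 d3)"
    using curve_orbit[OF assms] by blast
  show "((\<lambda>t. diag3 d1 d2 d3 + t *\<^sub>R Vv d1 d2 d3 s i + (t^2) *\<^sub>R Ww d1 d2 d3 s i) has_vector_derivative Vv d1 d2 d3 s i) (at 0)"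
    using curve_deriv[of "diag3 d1 d2 d3" "Vv d1 d2 d3 s i" "Ww d1 d2 d3 s i" 0] by simp
qed simp



definition Lsp :: "mat3 set" where "Lsp = {X. transpose X = X \<and> inL X}"
definition Kd :: "real \<Rightarrow> real \<Rightarrow> mat3 set" where "Kd d2 d3 = {X. transpose X = X \<and> d3 * X$2$2 = d2 * X$3$3}"

lemma sym_iff: "transpose (X::mat3) = X \<longleftrightarrow> X$1$2 = X$2$1 \<and> X$1$3 = X$3$1 \<and> X$2$3 = X$3$2"
  unfolding mat3_eq tr3 by auto

lemma subspace_Lsp: "subspace Lsp"
  unfolding subspace_def Lsp_def sym_iff inL_def by auto

lemma subspace_Kd: "subspace (Kd d2 d3)"
  unfolding subspace_def Kd_def sym_iff by (auto simp: algebra_simps)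

lemma mat1_diag: "mat 1 = diag3 1 1 1"
  unfolding mat3_eq by (simp add: mat1_nth diag3_def)

lemma diff_const_deriv:
  assumes "((\<gamma>::real \<Rightarrow> mat3) has_vector_derivative v) (at 0)" "\<And>t. \<gamma> t $ i $ j = \<gamma> t $ k $ l"
  shows "v $ i $ j = v $ k $ l"
proof -
  have "((\<lambda>s. \<gamma> s $ i $ j - \<gamma> s $ k $ l) has_real_derivative v $ i $ j - v $ k $ l) (at 0)"
    by (intro DERIV_diff comp_deriv assms(1))
  hence "v $ i $ j - v $ k $ l = 0" by (rule deriv_zero[rotated]) (simp add: assms(2))
  thus ?thesis by simp
qed

lemma zero_const_deriv:
  assumes "((\<gamma>::real \<Rightarrow> mat3) has_vector_derivative v) (at 0)" "\<And>t. \<gamma> t $ i $ j = 0"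
  shows "v $ i $ j = 0"
  by (rule deriv_zero[rotated, OF comp_deriv[OF assms(1)]]) (simp add: assms(2))

lemma TS_I_sub: "tangent_space (orbit a (mat 1)) (mat 1) \<subseteq> Lsp"
proof (rule TS_sub[OF _ subspace_Lsp])
  fix v \<gamma> assume g: "\<forall>t. \<gamma> t \<in> orbit a (mat 1)" "(\<gamma> has_vector_derivative v) (at 0)"
  have L: "\<gamma> t \<in> Lsp" for t
    using orbit_sym[of "mat 1" "\<gamma> t" a] orbit_inL[of "mat 1" "\<gamma> t" a] g(1)
    unfolding Lsp_def by (auto simp: inL_def mat1_nth)
  have e: "\<gamma> t $ 1 $ 2 = \<gamma> t $ 2 $ 1" "\<gamma> t $ 1 $ 3 = \<gamma> t $ 3 $ 1" "\<gamma> t $ 2 $ 3 = \<gamma> t $ 3 $ 2"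
     "\<gamma> t $ 2 $ 2 = \<gamma> t $ 3 $ 3" "\<gamma> t $ 2 $ 3 = 0" "\<gamma> t $ 3 $ 2 = 0" for t
    using L[of t] unfolding Lsp_def sym_iff inL_def by auto
  show "v \<in> Lsp" unfolding Lsp_def sym_iff inL_def
    using diff_const_deriv[OF g(2) e(1)] diff_const_deriv[OF g(2) e(2)] diff_const_deriv[OF g(2) e(3)]
      diff_const_deriv[OF g(2) e(4)] zero_const_deriv[OF g(2) e(5)] zero_const_deriv[OF g(2) e(6)]
    by simp
qed

definition B4 :: "mat3 set" where "B4 = {b11, diag3 0 1 1, s12, s13}"

lemma Lsp_span: "Lsp \<subseteq> span B4"
proof
  fix X assume "X \<in> Lsp"
  hence X: "X$1$2 = X$2$1" "X$1$3 = X$3$1" "X$2$3 = X$3$2" "X$2$2 = X$3$3" "X$2$3 = 0"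
    unfolding Lsp_def sym_iff inL_def by auto
  have "X = (X$1$1) *\<^sub>R b11 + (X$2$2) *\<^sub>R diag3 0 1 1 + (X$1$2) *\<^sub>R s12 + (X$1$3) *\<^sub>R s13"
    unfolding mat3_eq using X by (simp add: mdefs)
  moreover have "(X$1$1) *\<^sub>R b11 + (X$2$2) *\<^sub>R diag3 0 1 1 + (X$1$2) *\<^sub>R s12 + (X$1$3) *\<^sub>R s13 \<in> span B4"
    unfolding B4_def by (intro span_add span_scale span_base) auto
  ultimately show "X \<in> span B4" by simp
qed

lemma B4_TS: "B4 \<subseteq> tangent_space (orbit a (mat 1)) (mat 1)"
  using Vv_TS[of 0 1 1 1 1 a] Vv_TS[of 1 1 1 1 1 a] Vv_TS[of 2 1 1 1 1 a] Vv_TS[of 3 1 1 1 1 a]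
  unfolding B4_def mat1_diag by (simp add: Vv_def)

lemma TS_I: "tangent_space (orbit a (mat 1)) (mat 1) = Lsp"
proof
  show "tangent_space (orbit a (mat 1)) (mat 1) \<subseteq> Lsp" by (rule TS_I_sub)
  have "span B4 \<subseteq> tangent_space (orbit a (mat 1)) (mat 1)"
    using B4_TS by (simp add: TS_gens span_minimal)
  thus "Lsp \<subseteq> tangent_space (orbit a (mat 1)) (mat 1)" using Lsp_span by blast
qed

lemma inner3: "(A::mat3) \<bullet> B = A$1$1*B$1$1 + A$1$2*B$1$2 + A$1$3*B$1$3 + A$2$1*B$2$1 + A$2$2*B$2$2 + A$2$3*B$2$3
   + A$3$1*B$3$1 + A$3$2*B$3$2 + A$3$3*B$3$3"
  by (simp add: inner_vec_def sum_3)

lemma B4_indep: "independent B4"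
  by (rule pairwise_orthogonal_independent) (auto simp: B4_def pairwise_def orthogonal_def inner3 mdefs mat3_eq)

lemma B4_card: "card B4 = 4"
  unfolding B4_def by (simp add: mdefs mat3_eq)

lemma Lsp_eq: "Lsp = span B4"
  using Lsp_span B4_TS TS_I span_minimal[OF _ subspace_Lsp] by (metis subset_antisym)

lemma dim_Lsp: "dim Lsp = 4"
  using Lsp_eq dim_span_eq_card_independent[OF B4_indep] B4_card by simp

lemma orbit_dim_I: "orbit_dim a (mat 1) = 4"
  unfolding orbit_dim_def TS_I dim_Lsp ..



definition B5 :: "real \<Rightarrow> real \<Rightarrow> real \<Rightarrow> mat3 set" where
  "B5 d1 d2 d3 = {d1 *\<^sub>R b11, diag3 0 d2 d3, d2 *\<^sub>R s12, d3 *\<^sub>R s13, (d3-d2) *\<^sub>R s23}"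

lemma B5_eq: "B5 d1 d2 d3 = Vv d1 d2 d3 1 ` {..<5}"
proof -
  have "{..<5::nat} = {0,1,2,3,4}" by auto
  thus ?thesis unfolding B5_def by (simp add: Vv_def insert_commute)
qed

lemma B5_TS: "B5 d1 d2 d3 \<subseteq> tangent_space (orbit a (diag3 d1 d2 d3)) (diag3 d1 d2 d3)"
  unfolding B5_eq using Vv_TS by blast

lemma Kd_span: assumes "d1 \<noteq> 0" "d2 \<noteq> 0" "d3 \<noteq> 0" "d2 \<noteq> d3" shows "Kd d2 d3 \<subseteq> span (B5 d1 d2 d3)"
proof
  fix X assume "X \<in> Kd d2 d3"
  hence X: "X$1$2 = X$2$1" "X$1$3 = X$3$1" "X$2$3 = X$3$2" "d3 * X$2$2 = d2 * X$3$3"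
    unfolding Kd_def sym_iff by auto
  have d32: "d3 - d2 \<noteq> 0" using assms by simp
  have X33: "X$3$3 = d3 * X$2$2 / d2" using X(4) assms by (simp add: field_simps)
  have "X = (X$1$1/d1) *\<^sub>R (d1 *\<^sub>R b11) + (X$2$2/d2) *\<^sub>R diag3 0 d2 d3 + (X$1$2/d2) *\<^sub>R (d2 *\<^sub>R s12)
       + (X$1$3/d3) *\<^sub>R (d3 *\<^sub>R s13) + (X$2$3/(d3-d2)) *\<^sub>R ((d3-d2) *\<^sub>R s23)"
    unfolding mat3_eq using X(1-3) assms d32 X33 by (simp add: mdefs)
  moreover have "(X$1$1/d1) *\<^sub>R (d1 *\<^sub>R b11) + (X$2$2/d2) *\<^sub>R diag3 0 d2 d3 + (X$1$2/d2) *\<^sub>R (d2 *\<^sub>R s12)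
       + (X$1$3/d3) *\<^sub>R (d3 *\<^sub>R s13) + (X$2$3/(d3-d2)) *\<^sub>R ((d3-d2) *\<^sub>R s23) \<in> span (B5 d1 d2 d3)"
    unfolding B5_def by (intro span_add span_scale span_base) auto
  ultimately show "X \<in> span (B5 d1 d2 d3)" by simp
qed

lemma TS_D_sub: assumes "d2 > 0" "d3 > 0" "d2 \<noteq> d3"
  shows "tangent_space (orbit a (diag3 d1 d2 d3)) (diag3 d1 d2 d3) \<subseteq> Kd d2 d3"
proof (rule TS_sub[OF _ subspace_Kd])
  let ?D = "diag3 d1 d2 d3"
  fix v \<gamma> assume g: "\<forall>t. \<gamma> t \<in> orbit a ?D" "\<gamma> 0 = ?D" "(\<gamma> has_vector_derivative v) (at 0)"
  have symD: "transpose ?D = ?D" unfolding sym_iff by (simp add: diag3_def)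
  have S: "transpose (\<gamma> t) = \<gamma> t" for t using orbit_sym[OF symD] g(1) by blast
  have e: "\<gamma> t $ 1 $ 2 = \<gamma> t $ 2 $ 1" "\<gamma> t $ 1 $ 3 = \<gamma> t $ 3 $ 1" "\<gamma> t $ 2 $ 3 = \<gamma> t $ 3 $ 2" for t
    using S[of t] unfolding sym_iff by auto
  define k1 where "k1 = (tB ?D)^2"
  define k2 where "k2 = dB ?D"
  have inv: "(\<gamma> t $ 2 $ 2 * \<gamma> t $ 3 $ 3 - \<gamma> t $ 2 $ 3 * \<gamma> t $ 3 $ 2) * k1 - k2 * (\<gamma> t $ 2 $ 2 + \<gamma> t $ 3 $ 3)^2 = 0" for t
    using orbit_inv[OF symD, of "\<gamma> t" a] g(1) unfolding k1_def k2_def dB_def[of "\<gamma> t"] tB_def[of "\<gamma> t"] by auto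
  note c = comp_deriv[OF g(3)]
  have "((\<lambda>t. (\<gamma> t $ 2 $ 2 * \<gamma> t $ 3 $ 3 - \<gamma> t $ 2 $ 3 * \<gamma> t $ 3 $ 2) * k1 - k2 * (\<gamma> t $ 2 $ 2 + \<gamma> t $ 3 $ 3)^2)
     has_real_derivative
      ((v$2$2 * \<gamma> 0 $ 3 $ 3 + \<gamma> 0 $ 2 $ 2 * v$3$3 - (v$2$3 * \<gamma> 0 $ 3 $ 2 + \<gamma> 0 $ 2 $ 3 * v$3$2)) * k1
       - k2 * (2 * (\<gamma> 0 $ 2 $ 2 + \<gamma> 0 $ 3 $ 3) * (v$2$2 + v$3$3)))) (at 0)"
    by (auto intro!: derivative_eq_intros c simp: algebra_simps)
  hence "(v$2$2 * \<gamma> 0 $ 3 $ 3 + \<gamma> 0 $ 2 $ 2 * v$3$3 - (v$2$3 * \<gamma> 0 $ 3 $ 2 + \<gamma> 0 $ 2 $ 3 * v$3$2)) * k1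
       - k2 * (2 * (\<gamma> 0 $ 2 $ 2 + \<gamma> 0 $ 3 $ 3) * (v$2$2 + v$3$3)) = 0"
    by (rule deriv_zero[rotated]) (rule inv)
  hence "(v$2$2 * d3 + d2 * v$3$3) * (d2 + d3)^2 - d2 * d3 * (2 * (d2 + d3) * (v$2$2 + v$3$3)) = 0"
    unfolding g(2) k1_def k2_def dB_def tB_def by (simp add: diag3_def)
  hence "(d2 + d3) * (d3 - d2) * (d3 * v$2$2 - d2 * v$3$3) = 0"
    by (simp add: algebra_simps power2_eq_square) 
  moreover have "(d2 + d3) * (d3 - d2) \<noteq> 0" using assms by auto
  ultimately have "d3 * v$2$2 = d2 * v$3$3" by simp
  moreover have "v $ 1 $ 2 = v $ 2 $ 1" "v $ 1 $ 3 = v $ 3 $ 1" "v $ 2 $ 3 = v $ 3 $ 2"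
    using diff_const_deriv[OF g(3) e(1)] diff_const_deriv[OF g(3) e(2)] diff_const_deriv[OF g(3) e(3)] by auto
  ultimately show "v \<in> Kd d2 d3" unfolding Kd_def sym_iff by auto
qed

lemma B5_indep: assumes "d1 \<noteq> 0" "d2 \<noteq> 0" "d3 \<noteq> 0" "d2 \<noteq> d3" shows "independent (B5 d1 d2 d3)"
  by (rule pairwise_orthogonal_independent) (use assms in \<open>auto simp: B5_def pairwise_def orthogonal_def inner3 mdefs mat3_eq\<close>)

lemma B5_card: assumes "d1 \<noteq> 0" "d2 \<noteq> 0" "d3 \<noteq> 0" "d2 \<noteq> d3" shows "card (B5 d1 d2 d3) = 5"
  unfolding B5_def using assms by (simp add: mdefs mat3_eq)

lemma TS_D: assumes "d1 > 0" "d2 > 0" "d3 > 0" "d2 \<noteq> d3"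
  shows "tangent_space (orbit a (diag3 d1 d2 d3)) (diag3 d1 d2 d3) = Kd d2 d3"
    "Kd d2 d3 = span (B5 d1 d2 d3)"
proof -
  have 1: "span (B5 d1 d2 d3) \<subseteq> tangent_space (orbit a (diag3 d1 d2 d3)) (diag3 d1 d2 d3)"
    using B5_TS by (simp add: TS_gens span_minimal)
  have 2: "span (B5 d1 d2 d3) \<subseteq> Kd d2 d3" using 1 TS_D_sub[OF assms(2-4)] by blast
  show "tangent_space (orbit a (diag3 d1 d2 d3)) (diag3 d1 d2 d3) = Kd d2 d3"
    using 1 TS_D_sub[OF assms(2-4)] Kd_span[of d1 d2 d3] assms by auto
  show "Kd d2 d3 = span (B5 d1 d2 d3)" using 2 Kd_span[of d1 d2 d3] assms by auto
qed

lemma orbit_dim_D: assumes "d1 > 0" "d2 > 0" "d3 > 0" "d2 \<noteq> d3"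
  shows "orbit_dim a (diag3 d1 d2 d3) = 5"
proof -
  have "dim (Kd d2 d3) = 5" using TS_D(2)[OF assms] dim_span_eq_card_independent[OF B5_indep] B5_card assms by auto
  thus ?thesis unfolding orbit_dim_def TS_D(1)[OF assms] .
qed



lemma angle_exists: "\<exists>t::real. cos t * y = sin t * x"
proof (cases "x = 0")
  case True thus ?thesis by (intro exI[of _ "pi/2"]) simp
next
  case False
  show ?thesis
    by (intro exI[of _ "arctan (y/x)"]) (use False in \<open>simp add: sin_arctan cos_arctan field_simps\<close>)
qed

lemma diag_quad: "(transpose h ** P ** h) $ j $ j = (\<chi> i. h$i$j) \<bullet> (P *v (\<chi> i. h$i$j))"
  for h P :: mat3
  by (simp add: mm3 tr3 mv3 inner_vec_def sum_3 algebra_simps)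

lemma PD_facts: assumes "P \<in> PD"
  shows "transpose P = P" "\<And>x. x \<noteq> 0 \<Longrightarrow> x \<bullet> (P *v x) > 0"
  using assms unfolding PD_def by auto

lemma col_nz: assumes "(h::mat3)$1$j \<noteq> 0 \<or> h$2$j \<noteq> 0 \<or> h$3$j \<noteq> 0" shows "(\<chi> i. h$i$j) \<noteq> (0::vec3)"
  using assms by (auto simp: vec_eq_iff)

lemma normal_form: assumes "P \<in> PD"
  shows "\<exists>d1 d2 d3. d1 > 0 \<and> d2 > 0 \<and> d3 > 0 \<and> diag3 d1 d2 d3 \<in> orbit a P"
proof -
  have S: "transpose P = P" and pos: "\<And>x. x \<noteq> 0 \<Longrightarrow> x \<bullet> (P *v x) > 0" using PD_facts[OF assms] by auto
  have s: "P$1$2 = P$2$1" "P$1$3 = P$3$1" "P$2$3 = P$3$2" using S unfolding sym_iff by auto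
  define b where "b = P$2$2"
  define e where "e = P$2$3"
  define d where "d = P$3$3"
  define u2 where "u2 = P$2$1"
  define u3 where "u3 = P$3$1"
  have bpos: "b > 0"
    using pos[of "vector [0,1,0]"] unfolding b_def by (simp add: vec_eq_iff forall_3 mv3 inner_vec_def sum_3)
  have "vector [0,-e,b] \<bullet> (P *v vector [0,-e,b]) > 0"
    using pos bpos by (simp add: vec_eq_iff forall_3)
  hence "b * (b * d - e^2) > 0"
    unfolding b_def d_def e_def by (simp add: mv3 inner_vec_def sum_3 s power2_eq_square algebra_simps)
  hence Dp: "b * d - e^2 > 0" using bpos by (simp add: zero_less_mult_iff)
  define \<Delta> where "\<Delta> = b * d - e^2"
  have D0: "\<Delta> \<noteq> 0" using Dp unfolding \<Delta>_def by simp
  define w2 where "w2 = (- u2 * d + e * u3) / \<Delta>"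
  define w3 where "w3 = (- b * u3 + e * u2) / \<Delta>"
  have W2: "u2 + b * w2 + e * w3 = 0" unfolding w2_def w3_def \<Delta>_def using D0 unfolding \<Delta>_def
    by (simp add: field_simps) algebra
  have W3: "u3 + e * w2 + d * w3 = 0" unfolding w2_def w3_def \<Delta>_def using D0 unfolding \<Delta>_def
    by (simp add: field_simps) algebra
  obtain t where t: "cos t * e = sin t * ((b - d)/2)" using angle_exists by blast
  define p where "p = cos (t/2)"
  define q where "q = sin (t/2)"
  have pq: "p^2 + q^2 = 1" unfolding p_def q_def by (simp add: add.commute)
  have ct: "cos t = p^2 - q^2" unfolding p_def q_def using cos_double[of "t/2"] by simp
  have st: "sin t = 2 * q * p" unfolding p_def q_def using sin_double[of "t/2"] by simp
  have rot: "(p*p - q*q) * P$2$3 - p * q * (P$2$2 - P$3$3) = 0" using t unfolding ct st b_def e_def d_def by (simp add: algebra_simps power2_eq_square)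
  define h where "h = F w2 w3 p q"
  have hR: "h \<in> RAut a" unfolding h_def using pq by (intro F_RAut1) simp
  define Q where "Q = transpose h ** P ** h"
  have Qo: "Q \<in> orbit a P" unfolding Q_def using orbit_transpose[OF hR] .
  have Q12: "Q$1$2 = 0" "Q$2$1 = 0" "Q$1$3 = 0" "Q$3$1 = 0"
    unfolding Q_def h_def F_def mm3 tr3 using W2 W3 s
    unfolding b_def d_def e_def u2_def u3_def by (simp_all add: algebra_simps, algebra+)
  have Q23: "Q$2$3 = 0" "Q$3$2 = 0"
    unfolding Q_def h_def F_def mm3 tr3 M3_nth using rot s(3)[symmetric] by (simp; algebra)+
  have Q11: "Q$1$1 > 0" unfolding Q_def diag_quad by (rule pos, rule col_nz) (simp add: h_def F_def)
  have pq0: "p \<noteq> 0 \<or> q \<noteq> 0" using pq by auto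
  have Q22: "Q$2$2 > 0" unfolding Q_def diag_quad by (rule pos, rule col_nz) (use pq0 in \<open>simp add: h_def F_def\<close>)
  have Q33: "Q$3$3 > 0" unfolding Q_def diag_quad by (rule pos, rule col_nz) (use pq0 in \<open>auto simp add: h_def F_def\<close>)
  have "Q = diag3 (Q$1$1) (Q$2$2) (Q$3$3)" unfolding mat3_eq using Q12 Q23 by (simp add: diag3_def)
  thus ?thesis using Qo Q11 Q22 Q33 by metis
qed



lemma diag_in_I: assumes "d1 > 0" "d2 > 0" shows "diag3 d1 d2 d2 \<in> orbit a (mat 1)"
proof -
  let ?h = "sqrt d1 *\<^sub>R F 0 0 (sqrt d2 / sqrt d1) 0"
  have "?h \<in> RAut a" using assms by (intro F_RAut) auto
  moreover have "transpose ?h ** mat 1 ** ?h = diag3 d1 d2 d2"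
    unfolding mat3_eq mm3 tr3 using assms by (simp add: mat1_nth F_def diag3_def)
  ultimately show ?thesis using orbit_transpose by metis
qed

lemma inL_I: "inL (mat 1)" unfolding inL_def by (simp add: mat1_nth)

lemma classify: assumes "P \<in> PD"
  shows "inL P \<Longrightarrow> orbit a P = orbit a (mat 1) \<and> orbit_dim a P = 4"
    and "\<not> inL P \<Longrightarrow> (\<exists>d1 d2 d3. d1 > 0 \<and> d2 > 0 \<and> d3 > 0 \<and> d2 \<noteq> d3 \<and> orbit a P = orbit a (diag3 d1 d2 d3)) \<and> orbit_dim a P = 5"
proof -
  obtain d1 d2 d3 where d: "d1 > 0" "d2 > 0" "d3 > 0" and Do: "diag3 d1 d2 d3 \<in> orbit a P"
    using normal_form[OF assms] by blast
  have oe: "orbit a (diag3 d1 d2 d3) = orbit a P" using orbit_sub[OF Do] .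
  have PD: "P \<in> orbit a (diag3 d1 d2 d3)" using oe self_orbit by blast
  { assume L: "inL P"
    have "inL (diag3 d1 d2 d3)" using orbit_inL[OF L Do] .
    hence "d2 = d3" unfolding inL_def by (simp add: diag3_def)
    hence DI: "diag3 d1 d2 d3 \<in> orbit a (mat 1)" using diag_in_I d by simp
    hence "orbit a (mat 1) = orbit a P" using orbit_sub[OF DI] oe by simp
    moreover have "orbit_dim a P = 4"
      using orbit_dim_eq[of P a "mat 1"] calculation self_orbit orbit_dim_I by metis
    ultimately show "orbit a P = orbit a (mat 1) \<and> orbit_dim a P = 4" by simp }
  { assume L: "\<not> inL P"
    have "d2 \<noteq> d3"
    proof
      assume "d2 = d3"
      hence "inL (diag3 d1 d2 d3)" unfolding inL_def by (simp add: diag3_def)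
      thus False using orbit_inL[OF _ PD] L by blast
    qed
    moreover have "orbit_dim a P = 5" using orbit_dim_eq[OF PD] orbit_dim_D[OF d calculation] by simp
    ultimately show "(\<exists>d1 d2 d3. d1 > 0 \<and> d2 > 0 \<and> d3 > 0 \<and> d2 \<noteq> d3 \<and> orbit a P = orbit a (diag3 d1 d2 d3)) \<and> orbit_dim a P = 5"
      using d oe by metis }
qed

lemma not_inL_orbit: assumes "\<not> inL P" shows "orbit a P \<noteq> orbit a (mat 1)"
  using orbit_inL[OF inL_I, of P a] self_orbit[of P a] assms by auto

lemma PD_112: "diag3 1 1 2 \<in> PD"
proof -
  have "x \<bullet> (diag3 1 1 2 *v x) > 0" if "x \<noteq> 0" for x :: vec3
  proof -
    have "x$1 \<noteq> 0 \<or> x$2 \<noteq> 0 \<or> x$3 \<noteq> 0" using that by (auto simp: vec_eq_iff forall_3)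
    moreover have "x \<bullet> (diag3 1 1 2 *v x) = (x$1)^2 + (x$2)^2 + 2 * (x$3)^2"
      by (simp add: mv3 inner_vec_def sum_3 diag3_def power2_eq_square)
    ultimately show ?thesis by (auto simp: add_pos_nonneg add_nonneg_pos)
  qed
  moreover have "transpose (diag3 1 1 2) = diag3 1 1 2" unfolding sym_iff by (simp add: diag3_def)
  ultimately show ?thesis unfolding PD_def by blast
qed

lemma max_dim: "max_orbit_dim a = 5"
proof -
  have sub: "{orbit_dim a P | P. P \<in> PD} \<subseteq> {4, 5}" using classify by blast
  have in5: "5 \<in> {orbit_dim a P | P. P \<in> PD}"
    using orbit_dim_D[of 1 1 2 a] PD_112 by force
  have fin: "finite {orbit_dim a P | P. P \<in> PD}" using sub finite_subset by blast
  have "Max {orbit_dim a P | P. P \<in> PD} = 5"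
    by (rule Max_eqI[OF fin]) (use sub in5 in auto)
  thus ?thesis unfolding max_orbit_dim_def .
qed

definition B6 :: "mat3 set" where "B6 = {b11, b22, b33, s12, s13, s23}"

lemma Sym_eq: "Sym = span B6"
proof
  show "span B6 \<subseteq> Sym"
    by (rule span_minimal) (auto simp: B6_def Sym_def sym_iff mdefs subspace_def)
  show "Sym \<subseteq> span B6"
  proof
    fix X assume "X \<in> Sym"
    hence X: "X$1$2 = X$2$1" "X$1$3 = X$3$1" "X$2$3 = X$3$2" unfolding Sym_def sym_iff by auto
    have "X = (X$1$1) *\<^sub>R b11 + (X$2$2) *\<^sub>R b22 + (X$3$3) *\<^sub>R b33 + (X$1$2) *\<^sub>R s12 + (X$1$3) *\<^sub>R s13 + (X$2$3) *\<^sub>R s23"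
      unfolding mat3_eq using X by (simp add: mdefs)
    moreover have "(X$1$1) *\<^sub>R b11 + (X$2$2) *\<^sub>R b22 + (X$3$3) *\<^sub>R b33 + (X$1$2) *\<^sub>R s12 + (X$1$3) *\<^sub>R s13 + (X$2$3) *\<^sub>R s23 \<in> span B6"
      unfolding B6_def by (intro span_add span_scale span_base) auto
    ultimately show "X \<in> span B6" by simp
  qed
qed

lemma dim_Sym: "dim Sym = 6"
proof -
  have i: "independent B6"
    by (rule pairwise_orthogonal_independent) (auto simp: B6_def pairwise_def orthogonal_def inner3 mdefs mat3_eq)
  have "card B6 = 6" unfolding B6_def by (simp add: mdefs mat3_eq)
  thus ?thesis unfolding Sym_eq using dim_span_eq_card_independent[OF i] by simp
qed

lemma part1: "cohomogeneity_one a" "singular_orbit a (mat 1)"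
  "\<forall>P \<in> PD. singular_orbit a P \<longleftrightarrow> orbit a P = orbit a (mat 1)"
proof -
  show "cohomogeneity_one a" unfolding cohomogeneity_one_def max_dim dim_Sym by simp
  show "singular_orbit a (mat 1)" unfolding singular_orbit_def max_dim orbit_dim_I by simp
  show "\<forall>P \<in> PD. singular_orbit a P \<longleftrightarrow> orbit a P = orbit a (mat 1)"
  proof
    fix P assume P: "P \<in> PD"
    show "singular_orbit a P \<longleftrightarrow> orbit a P = orbit a (mat 1)"
    proof (cases "inL P")
      case True thus ?thesis using classify(1)[OF P True] unfolding singular_orbit_def max_dim by simp
    next
      case False thus ?thesis using classify(2)[OF P False] not_inL_orbit[OF False] unfolding singular_orbit_def max_dim by simp
    qed
  qed
qed



definition \<beta> :: "mat3 \<Rightarrow> mat3 \<Rightarrow> real" where "\<beta> X Y = trace (X ** Y) / 4"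

lemma trace3: "trace (A::mat3) = A$1$1 + A$2$2 + A$3$3" by (simp add: trace_def sum_3)

lemma linear_beta: "linear (\<lambda>X. \<beta> X Y)"
proof (rule linearI)
  fix X Z :: mat3 and r :: real
  show "\<beta> (X + Z) Y = \<beta> X Y + \<beta> Z Y" unfolding \<beta>_def trace3 mm3 by (simp only: vector_add_component vector_scaleR_component real_scaleR_def; algebra)
  show "\<beta> (r *\<^sub>R X) Y = r *\<^sub>R \<beta> X Y" unfolding \<beta>_def trace3 mm3 by (simp only: vector_add_component vector_scaleR_component real_scaleR_def; algebra)
qed

lemma beta_sym: "\<beta> X Y = \<beta> Y X" unfolding \<beta>_def using trace_mul_sym by metis

lemma beta_sum: "\<beta> (\<Sum>i\<in>I. c i *\<^sub>R X i) Y = (\<Sum>i\<in>I. c i * \<beta> (X i) Y)"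
  using linear_sum[OF linear_beta, of "\<lambda>i. c i *\<^sub>R X i" I] linear_scale[OF linear_beta] by simp

lemma parseval:
  fixes E :: "nat \<Rightarrow> mat3"
  assumes orth: "\<forall>i<k. \<forall>j<k. \<beta> (E i) (E j) = (if i = j then 1 else 0)"
    and U: "U \<in> span (E ` {..<k})"
  shows "(\<Sum>i<k. \<beta> (E i) U * \<beta> (E i) V) = \<beta> U V"
proof -
  have inj: "inj_on E {..<k}"
  proof (rule inj_onI)
    fix i j assume "i \<in> {..<k}" "j \<in> {..<k}" "E i = E j"
    thus "i = j" using orth by (metis lessThan_iff zero_neq_one)
  qed
  obtain u where "U = (\<Sum>v\<in>E ` {..<k}. u v *\<^sub>R v)"
    using U span_finite[of "E ` {..<k}"] by auto
  hence Ue: "U = (\<Sum>i<k. u (E i) *\<^sub>R E i)" using sum.reindex[OF inj, of "\<lambda>v. u v *\<^sub>R v"] by simp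
  have c: "\<beta> (E j) U = u (E j)" if "j < k" for j
  proof -
    have "\<beta> (E j) U = \<beta> U (E j)" by (rule beta_sym)
    also have "\<dots> = (\<Sum>i<k. u (E i) * \<beta> (E i) (E j))" unfolding Ue by (rule beta_sum)
    also have "\<dots> = (\<Sum>i<k. if i = j then u (E i) else 0)"
      by (rule sum.cong) (use orth that in auto)
    also have "\<dots> = u (E j)" using that by simp
    finally show ?thesis .
  qed
  have "\<beta> U V = (\<Sum>i<k. u (E i) * \<beta> (E i) V)" unfolding Ue by (rule beta_sum)
  also have "\<dots> = (\<Sum>i<k. \<beta> (E i) U * \<beta> (E i) V)" by (rule sum.cong) (auto simp: c)
  finally show ?thesis by simp
qed



lemma diff_const_deriv_t:
  assumes "((\<gamma>::real \<Rightarrow> mat3) has_vector_derivative v) (at t)" "\<And>s. \<gamma> s $ i $ j = \<gamma> s $ k $ l"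
  shows "v $ i $ j = v $ k $ l"
proof -
  have "((\<lambda>s. \<gamma> s $ i $ j - \<gamma> s $ k $ l) has_real_derivative v $ i $ j - v $ k $ l) (at t)"
    by (intro DERIV_diff comp_deriv assms(1))
  hence "v $ i $ j - v $ k $ l = 0" by (rule deriv_zero[rotated]) (simp add: assms(2))
  thus ?thesis by simp
qed

lemma zero_const_deriv_t:
  assumes "((\<gamma>::real \<Rightarrow> mat3) has_vector_derivative v) (at t)" "\<And>s. \<gamma> s $ i $ j = 0"
  shows "v $ i $ j = 0"
  by (rule deriv_zero[rotated, OF comp_deriv[OF assms(1)]]) (simp add: assms(2))

lemma Lsp_deriv: assumes "\<forall>s. \<gamma> s \<in> Lsp" "(\<gamma> has_vector_derivative v) (at t)" shows "v \<in> Lsp"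
proof -
  have e: "\<gamma> s $ 1 $ 2 = \<gamma> s $ 2 $ 1" "\<gamma> s $ 1 $ 3 = \<gamma> s $ 3 $ 1" "\<gamma> s $ 2 $ 3 = \<gamma> s $ 3 $ 2"
     "\<gamma> s $ 2 $ 2 = \<gamma> s $ 3 $ 3" "\<gamma> s $ 2 $ 3 = 0" "\<gamma> s $ 3 $ 2 = 0" for s
    using assms(1) unfolding Lsp_def sym_iff inL_def by auto
  show "v \<in> Lsp" unfolding Lsp_def sym_iff inL_def
    using diff_const_deriv_t[OF assms(2) e(1)] diff_const_deriv_t[OF assms(2) e(2)] diff_const_deriv_t[OF assms(2) e(3)]
      diff_const_deriv_t[OF assms(2) e(4)] zero_const_deriv_t[OF assms(2) e(5)] zero_const_deriv_t[OF assms(2) e(6)]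
    by simp
qed

lemma good_Lsp: assumes "good N" "X \<in> Lsp" shows "transpose N ** X ** N \<in> Lsp"
  using assms sym_congr good_inL unfolding Lsp_def by auto

lemma act_Lsp: assumes "g \<in> RAut a" "X \<in> Lsp" shows "act g X \<in> Lsp"
  using act_good[OF assms(1)] good_Lsp assms(2) by simp

lemma act_Lsp_eq: assumes "g \<in> RAut a" shows "act g ` Lsp = Lsp"
proof
  show "act g ` Lsp \<subseteq> Lsp" using act_Lsp[OF assms] by blast
  show "Lsp \<subseteq> act g ` Lsp"
  proof
    fix X assume X: "X \<in> Lsp"
    have "X = act g (act (matrix_inv g) X)" using act_inv(2)[OF RAut_invertible[OF assms]] by simp
    moreover have "act (matrix_inv g) X \<in> Lsp" using act_Lsp[OF RAut_inv[OF assms] X] .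
    ultimately show "X \<in> act g ` Lsp" by blast
  qed
qed

lemma orbitI_Lsp: "Q \<in> orbit a (mat 1) \<Longrightarrow> Q \<in> Lsp"
  using orbit_sym[of "mat 1" Q a] orbit_inL[OF inL_I, of Q a] unfolding Lsp_def by simp

lemma TS_Q: assumes "Q \<in> orbit a (mat 1)" shows "tangent_space (orbit a (mat 1)) Q = Lsp"
proof -
  obtain g where g: "g \<in> RAut a" "Q = act g (mat 1)" using assms unfolding orbit_def by blast
  show ?thesis using TS_act[OF g(1) self_orbit] TS_I act_Lsp_eq[OF g(1)] g(2) by simp
qed

lemma beta_U12: "X \<in> Lsp \<Longrightarrow> \<beta> X (2 *\<^sub>R s12) = X$1$2"
  unfolding \<beta>_def trace3 mm3 Lsp_def sym_iff by (simp add: s12_def)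
lemma beta_U13: "X \<in> Lsp \<Longrightarrow> \<beta> X (2 *\<^sub>R s13) = X$1$3"
  unfolding \<beta>_def trace3 mm3 Lsp_def sym_iff by (simp add: s13_def)
lemma U_Lsp: "2 *\<^sub>R s12 \<in> Lsp" "2 *\<^sub>R s13 \<in> Lsp"
  unfolding Lsp_def sym_iff inL_def by (simp_all add: s12_def s13_def)
lemma beta_UU: "\<beta> (2 *\<^sub>R s12) (2 *\<^sub>R s13) = 0" "\<beta> (2 *\<^sub>R s12) (2 *\<^sub>R s12) = 2" "\<beta> (2 *\<^sub>R s13) (2 *\<^sub>R s13) = 2"
  unfolding \<beta>_def trace3 mm3 by (simp_all add: s12_def s13_def)

lemma sq_Lsp: assumes "X \<in> Lsp"
  shows "(X ** X)$2$3 = X$1$2 * X$1$3" "(X ** X)$3$2 = X$1$2 * X$1$3"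
    "(X ** X)$2$2 - (X ** X)$3$3 = (X$1$2)^2 - (X$1$3)^2"
    "(X ** X)$1$2 = (X ** X)$2$1" "(X ** X)$1$3 = (X ** X)$3$1" "(X ** X)$2$3 = (X ** X)$3$2"
  using assms unfolding Lsp_def sym_iff inL_def mm3 by (auto simp: power2_eq_square algebra_simps)

lemma sum_sq_Lsp:
  fixes E :: "nat \<Rightarrow> mat3"
  assumes L: "\<forall>i<k. E i \<in> Lsp"
    and orth: "\<forall>i<k. \<forall>j<k. \<beta> (E i) (E j) = (if i = j then 1 else 0)"
    and sp: "Lsp \<subseteq> span (E ` {..<k})"
  shows "(\<Sum>i<k. E i ** E i) \<in> Lsp"
proof -
  let ?\<sigma> = "\<Sum>i<k. E i ** E i"
  have P: "(\<Sum>i<k. \<beta> (E i) U * \<beta> (E i) V) = \<beta> U V" if "U \<in> Lsp" for U V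
    by (rule parseval[OF orth]) (use sp that in blast)
  have a: "?\<sigma>$2$3 = 0"
  proof -
    have "?\<sigma>$2$3 = (\<Sum>i<k. \<beta> (E i) (2 *\<^sub>R s12) * \<beta> (E i) (2 *\<^sub>R s13))"
      by (simp, rule sum.cong) (use L in \<open>auto simp: sq_Lsp beta_U12 beta_U13\<close>)
    thus ?thesis using P[OF U_Lsp(1)] beta_UU by simp
  qed
  have b: "?\<sigma>$3$2 = 0"
  proof -
    have "?\<sigma>$3$2 = (\<Sum>i<k. \<beta> (E i) (2 *\<^sub>R s12) * \<beta> (E i) (2 *\<^sub>R s13))"
      by (simp, rule sum.cong) (use L in \<open>auto simp: sq_Lsp beta_U12 beta_U13\<close>)
    thus ?thesis using P[OF U_Lsp(1)] beta_UU by simp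
  qed
  have c: "?\<sigma>$2$2 - ?\<sigma>$3$3 = 0"
  proof -
    have "?\<sigma>$2$2 - ?\<sigma>$3$3 = (\<Sum>i<k. \<beta> (E i) (2 *\<^sub>R s12) * \<beta> (E i) (2 *\<^sub>R s12)) - (\<Sum>i<k. \<beta> (E i) (2 *\<^sub>R s13) * \<beta> (E i) (2 *\<^sub>R s13))"
      by (simp add: sum_subtractf[symmetric], rule sum.cong) (use L in \<open>auto simp: sq_Lsp(3) beta_U12 beta_U13 power2_eq_square\<close>)
    thus ?thesis using P[OF U_Lsp(1)] P[OF U_Lsp(2)] beta_UU by simp
  qed
  have s: "?\<sigma>$1$2 = ?\<sigma>$2$1" "?\<sigma>$1$3 = ?\<sigma>$3$1" "?\<sigma>$2$3 = ?\<sigma>$3$2"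
    by (simp_all, (rule sum.cong; use L in \<open>auto simp: sq_Lsp\<close>)+)
  show ?thesis unfolding Lsp_def sym_iff inL_def using a b c s by simp
qed



lemma minimal_I: "minimal_submfd (orbit a (mat 1))"
  unfolding minimal_submfd_def Let_def
proof (intro ballI)
  fix Q assume Q: "Q \<in> orbit a (mat 1)"
  have T: "tangent_space (orbit a (mat 1)) Q = Lsp" by (rule TS_Q[OF Q])
  show "\<forall>E \<gamma> \<gamma>' A. (\<forall>i<dim (tangent_space (orbit a (mat 1)) Q). E i \<in> tangent_space (orbit a (mat 1)) Q) \<and>
            span (E ` {..<dim (tangent_space (orbit a (mat 1)) Q)}) = tangent_space (orbit a (mat 1)) Q \<and>
            (\<forall>i<dim (tangent_space (orbit a (mat 1)) Q). \<forall>j<dim (tangent_space (orbit a (mat 1)) Q). gmet Q (E i) (E j) = (if i = j then 1 else 0)) \<and>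
            (\<forall>i<dim (tangent_space (orbit a (mat 1)) Q).
                (\<forall>t. \<gamma> i t \<in> orbit a (mat 1)) \<and> \<gamma> i 0 = Q \<and> (\<forall>t. (\<gamma> i has_vector_derivative \<gamma>' i t) (at t)) \<and> \<gamma>' i 0 = E i \<and> (\<gamma>' i has_vector_derivative A i) (at 0)) \<longrightarrow>
            (\<Sum>i<dim (tangent_space (orbit a (mat 1)) Q). cov_acc Q (E i) (A i)) \<in> tangent_space (orbit a (mat 1)) Q"
    unfolding T
  proof (intro allI impI)
    fix E :: "nat \<Rightarrow> mat3" and \<gamma> \<gamma>' :: "nat \<Rightarrow> real \<Rightarrow> mat3" and A :: "nat \<Rightarrow> mat3"
    define k where "k = dim Lsp"
    assume H: "(\<forall>i<dim Lsp. E i \<in> Lsp) \<and> span (E ` {..<dim Lsp}) = Lsp \<and>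
      (\<forall>i<dim Lsp. \<forall>j<dim Lsp. gmet Q (E i) (E j) = (if i = j then 1 else 0)) \<and>
      (\<forall>i<dim Lsp. (\<forall>t. \<gamma> i t \<in> orbit a (mat 1)) \<and> \<gamma> i 0 = Q \<and> (\<forall>t. (\<gamma> i has_vector_derivative \<gamma>' i t) (at t)) \<and>
         \<gamma>' i 0 = E i \<and> (\<gamma>' i has_vector_derivative A i) (at 0))"
    hence EL: "\<forall>i<k. E i \<in> Lsp" and Esp: "span (E ` {..<k}) = Lsp"
      and orth: "\<forall>i<k. \<forall>j<k. gmet Q (E i) (E j) = (if i = j then 1 else 0)"
      and cur: "\<And>i. i < k \<Longrightarrow> (\<forall>t. \<gamma> i t \<in> orbit a (mat 1)) \<and> (\<forall>t. (\<gamma> i has_vector_derivative \<gamma>' i t) (at t)) \<and>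
         (\<gamma>' i has_vector_derivative A i) (at 0)"
      unfolding k_def by auto
    obtain g where g: "g \<in> RAut a" "Q = act g (mat 1)" using Q unfolding orbit_def by blast
    have ig: "invertible g" using RAut_invertible[OF g(1)] .
    define N where "N = matrix_inv g"
    have gN: "g ** N = mat 1" "N ** g = mat 1" unfolding N_def using minv[OF ig] by auto
    have tN: "transpose N ** transpose g = mat 1" "transpose g ** transpose N = mat 1"
      using gN by (metis matrix_transpose_mul transpose_mat)+
    have goodN: "good N" unfolding N_def using act_good(1)[OF g(1)] .
    have QN: "Q = transpose N ** N" unfolding g(2) act_def N_def by simp
    have mQ: "matrix_inv Q = g ** transpose g"
    proof (rule minv_unique)
      have "Q ** (g ** transpose g) = transpose N ** (N ** g) ** transpose g" unfolding QN by (simp add: matrix_mul_assoc)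
      thus "Q ** (g ** transpose g) = mat 1" using gN tN by simp
      have "(g ** transpose g) ** Q = g ** (transpose g ** transpose N) ** N" unfolding QN by (simp add: matrix_mul_assoc)
      thus "(g ** transpose g) ** Q = mat 1" using gN tN by simp
    qed
    define E' where "E' i = transpose g ** E i ** g" for i
    have E'L: "\<forall>i<k. E' i \<in> Lsp"
    proof (intro allI impI)
      fix i assume "i < k"
      have "act (matrix_inv g) (E i) = E' i" unfolding act_def E'_def using minv_inv(2)[OF ig] by simp
      thus "E' i \<in> Lsp" using act_Lsp[OF RAut_inv[OF g(1)]] EL \<open>i < k\<close> by metis
    qed
    have bet: "\<beta> (E' i) (E' j) = gmet Q (E i) (E j)" for i j
    proof -
      have "trace (E' i ** E' j) = trace ((transpose g ** (E i ** g ** transpose g ** E j)) ** g)"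
        by (simp add: E'_def matrix_mul_assoc)
      also have "\<dots> = trace (g ** (transpose g ** (E i ** g ** transpose g ** E j)))" by (rule trace_mul_sym)
      also have "\<dots> = trace (matrix_inv Q ** E i ** matrix_inv Q ** E j)" by (simp add: mQ matrix_mul_assoc)
      finally show ?thesis unfolding \<beta>_def gmet_def by simp
    qed
    have orth': "\<forall>i<k. \<forall>j<k. \<beta> (E' i) (E' j) = (if i = j then 1 else 0)" using orth bet by simp
    have sp': "Lsp \<subseteq> span (E' ` {..<k})"
    proof
      fix U assume U: "U \<in> Lsp"
      have "transpose N ** U ** N \<in> Lsp" using good_Lsp[OF goodN U] .
      hence X: "transpose N ** U ** N \<in> span (E ` {..<k})" using Esp by simp
      have "U = transpose g ** (transpose N ** U ** N) ** g"
      proof -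
        have "transpose g ** (transpose N ** U ** N) ** g = (transpose g ** transpose N) ** U ** (N ** g)"
          by (simp add: matrix_mul_assoc)
        thus ?thesis using gN tN by simp
      qed
      also have "\<dots> \<in> (\<lambda>Y. transpose g ** Y ** g) ` span (E ` {..<k})" using X by blast
      also have "\<dots> = span ((\<lambda>Y. transpose g ** Y ** g) ` E ` {..<k})"
        by (rule span_linear_image[OF linear_sandwich, symmetric])
      also have "\<dots> = span (E' ` {..<k})" by (simp add: image_image E'_def)
      finally show "U \<in> span (E' ` {..<k})" .
    qed
    have sig: "(\<Sum>i<k. E' i ** E' i) \<in> Lsp" by (rule sum_sq_Lsp[OF E'L orth' sp'])
    have trm: "E i ** matrix_inv Q ** E i = transpose N ** (E' i ** E' i) ** N" for i
    proof -
      have "transpose N ** (E' i ** E' i) ** N = (transpose N ** transpose g) ** E i ** (g ** transpose g) ** E i ** (g ** N)"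
        by (simp add: E'_def matrix_mul_assoc)
      thus ?thesis using gN tN mQ by (simp add: matrix_mul_assoc)
    qed
    have "(\<Sum>i<k. E i ** matrix_inv Q ** E i) = transpose N ** (\<Sum>i<k. E' i ** E' i) ** N"
      unfolding trm using linear_sum[OF linear_sandwich[of "transpose N" N], of "\<lambda>i. E' i ** E' i" "{..<k}"] by simp
    hence S1: "(\<Sum>i<k. E i ** matrix_inv Q ** E i) \<in> Lsp" using good_Lsp[OF goodN sig] by simp
    have AL: "A i \<in> Lsp" if "i < k" for i
    proof -
      have "\<gamma> i s \<in> Lsp" for s using cur[OF that] orbitI_Lsp by blast
      hence "\<gamma>' i t \<in> Lsp" for t using Lsp_deriv cur[OF that] by blast
      thus ?thesis using Lsp_deriv cur[OF that] by blast
    qed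
    have S2: "(\<Sum>i<k. A i) \<in> Lsp" using AL by (intro subspace_sum[OF subspace_Lsp]) auto
    have "(\<Sum>i<k. cov_acc Q (E i) (A i)) = (\<Sum>i<k. A i) - (\<Sum>i<k. E i ** matrix_inv Q ** E i)"
      unfolding cov_acc_def by (simp add: sum_subtractf)
    thus "(\<Sum>i<dim Lsp. cov_acc Q (E i) (A i)) \<in> Lsp"
      using subspace_diff[OF subspace_Lsp S2 S1] unfolding k_def by simp
  qed
qed



lemma sum5: "(\<Sum>i<(5::nat). f i) = f 0 + f 1 + f 2 + f 3 + (f 4 :: 'a::comm_monoid_add)"
  by (simp add: eval_nat_numeral add.assoc)

lemma lt5: "(i::nat) < 5 \<longleftrightarrow> i = 0 \<or> i = 1 \<or> i = 2 \<or> i = 3 \<or> i = 4" by auto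

lemma diag_inv: assumes "d1 \<noteq> 0" "d2 \<noteq> 0" "d3 \<noteq> 0"
  shows "matrix_inv (diag3 d1 d2 d3) = diag3 (1/d1) (1/d2) (1/d3)"
  by (rule minv_unique) (use assms in \<open>simp_all add: mat3_eq mm3 mat1_nth diag3_def\<close>)

lemma gmet_diag: assumes "d1 \<noteq> 0" "d2 \<noteq> 0" "d3 \<noteq> 0"
  shows "gmet (diag3 d1 d2 d3) X Y = (X$1$1*Y$1$1/(d1*d1) + X$1$2*Y$2$1/(d1*d2) + X$1$3*Y$3$1/(d1*d3)
     + X$2$1*Y$1$2/(d2*d1) + X$2$2*Y$2$2/(d2*d2) + X$2$3*Y$3$2/(d2*d3)
     + X$3$1*Y$1$3/(d3*d1) + X$3$2*Y$2$3/(d3*d2) + X$3$3*Y$3$3/(d3*d3)) / 4"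
  unfolding gmet_def diag_inv[OF assms] trace3 mm3 by (simp add: diag3_def field_simps)



lemma not_minimal_D: assumes d: "d1 > 0" "d2 > 0" "d3 > 0" "d2 \<noteq> d3"
  shows "\<not> minimal_submfd (orbit a (diag3 d1 d2 d3))"
proof
  assume m: "minimal_submfd (orbit a (diag3 d1 d2 d3))"
  let ?D = "diag3 d1 d2 d3"
  let ?S = "orbit a ?D"
  have T: "tangent_space ?S ?D = Kd d2 d3" using TS_D(1)[OF d] .
  have k: "dim (Kd d2 d3) = 5" using orbit_dim_D[OF d, of a] unfolding orbit_dim_def T .
  have d32: "d3 - d2 \<noteq> 0" using d by simp
  define s4 where "s4 = sqrt (2*d2*d3) / (d3 - d2)"
  have s4sq: "s4^2 * (d3-d2)^2 = 2*d2*d3" unfolding s4_def using d d32 by (simp add: power_divide)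
  have s4nz: "s4 \<noteq> 0" unfolding s4_def using d d32 by simp
  have s2sq: "(sqrt (2*d1/d2))^2 = 2*d1/d2" using d by simp
  have s3sq: "(sqrt (2*d1/d3))^2 = 2*d1/d3" using d by simp
  define sc :: "nat \<Rightarrow> real" where "sc i = (if i = 0 then 2 else if i = 1 then sqrt 2 else if i = 2 then sqrt (2*d1/d2)
      else if i = 3 then sqrt (2*d1/d3) else s4)" for i
  have scnz: "sc i \<noteq> 0" for i unfolding sc_def using d s4nz by auto
  define E where "E i = Vv d1 d2 d3 (sc i) i" for i
  define W where "W i = Ww d1 d2 d3 (sc i) i" for i
  define \<gamma> where "\<gamma> i t = ?D + t *\<^sub>R E i + (t^2) *\<^sub>R W i" for i t
  define \<gamma>' where "\<gamma>' i t = E i + (2*t) *\<^sub>R W i" for i t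
  define A where "A i = 2 *\<^sub>R W i" for i
  have ET: "\<forall>i<5. E i \<in> Kd d2 d3" unfolding E_def using Vv_TS T by blast
  have Esp: "span (E ` {..<5}) = Kd d2 d3"
  proof
    show "span (E ` {..<5}) \<subseteq> Kd d2 d3" using ET by (intro span_minimal subspace_Kd) auto
    have "B5 d1 d2 d3 \<subseteq> span (E ` {..<5})"
    proof
      fix X assume "X \<in> B5 d1 d2 d3"
      then obtain i where i: "i < 5" "X = Vv d1 d2 d3 1 i" unfolding B5_eq by blast
      have "X = (1 / sc i) *\<^sub>R E i" unfolding i(2) E_def Vv_def using scnz[of i] by auto
      moreover have "E i \<in> span (E ` {..<5})" using i(1) by (intro span_base) blast
      ultimately show "X \<in> span (E ` {..<5})" by (simp add: span_scale)
    qed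
    hence "span (B5 d1 d2 d3) \<subseteq> span (E ` {..<5})" by (simp add: span_minimal)
    thus "Kd d2 d3 \<subseteq> span (E ` {..<5})" using TS_D(2)[OF d] by simp
  qed
  have dn: "d1 \<noteq> 0" "d2 \<noteq> 0" "d3 \<noteq> 0" using d by auto
  have o44: "gmet ?D (E 4) (E 4) = 1"
  proof -
    have "gmet ?D (E 4) (E 4) = (s4^2 * (d3-d2)^2) / (2*d2*d3)"
      unfolding gmet_diag[OF dn] using d by (simp add: E_def sc_def Vv_def mdefs power2_eq_square field_simps)
    also have "\<dots> = 1" using s4sq d by simp
    finally show ?thesis .
  qed
  have orth: "\<forall>i<5. \<forall>j<5. gmet ?D (E i) (E j) = (if i = j then 1 else 0)"
  proof (intro allI impI)
    fix i j :: nat assume ij: "i < 5" "j < 5"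
    show "gmet ?D (E i) (E j) = (if i = j then 1 else 0)"
    proof (cases "i = 4 \<and> j = 4")
      case True thus ?thesis using o44 by simp
    next
      case False
      thus ?thesis using ij unfolding lt5 gmet_diag[OF dn] using d d32 s2sq s3sq
        by (auto simp: E_def sc_def Vv_def mdefs power2_eq_square field_simps)
    qed
  qed
  have cur: "\<forall>i<5. (\<forall>t. \<gamma> i t \<in> ?S) \<and> \<gamma> i 0 = ?D \<and> (\<forall>t. (\<gamma> i has_vector_derivative \<gamma>' i t) (at t)) \<and>
         \<gamma>' i 0 = E i \<and> (\<gamma>' i has_vector_derivative A i) (at 0)"
  proof (intro allI impI conjI)
    fix i :: nat and t :: real assume i: "i < 5"
    show "\<gamma> i t \<in> ?S" unfolding \<gamma>_def E_def W_def using curve_orbit[OF i] by blast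
    show "\<gamma> i 0 = ?D" unfolding \<gamma>_def by simp
    show "(\<gamma> i has_vector_derivative \<gamma>' i t) (at t)" unfolding \<gamma>_def \<gamma>'_def by (rule curve_deriv)
    show "\<gamma>' i 0 = E i" unfolding \<gamma>'_def by simp
    show "(\<gamma>' i has_vector_derivative A i) (at 0)" unfolding \<gamma>'_def A_def by (rule curve_deriv2)
  qed
  have "(\<Sum>i<5. cov_acc ?D (E i) (A i)) \<in> Kd d2 d3"
  proof -
    note m1 = bspec[OF m[unfolded minimal_submfd_def Let_def] self_orbit[of ?D a]]
    note m2 = m1[unfolded T k, rule_format, of E \<gamma> \<gamma>' A]
    show ?thesis by (rule m2) (use ET Esp orth cur in auto)
  qed
  hence inK: "d3 * (\<Sum>i<5. cov_acc ?D (E i) (A i))$2$2 = d2 * (\<Sum>i<5. cov_acc ?D (E i) (A i))$3$3"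
    unfolding Kd_def by simp
  have Dinv: "matrix_inv ?D = diag3 (1/d1) (1/d2) (1/d3)" using diag_inv d by simp
  have S22: "(\<Sum>i<5. cov_acc ?D (E i) (A i))$2$2 = 2 * s4^2 * d3 - s4^2*(d3-d2)^2/d3"
    unfolding sum_component sum5 cov_acc_def Dinv using d s2sq s3sq
    by (simp add: E_def A_def W_def sc_def Vv_def Ww_def mdefs mm3 power2_eq_square field_simps)
  have S33: "(\<Sum>i<5. cov_acc ?D (E i) (A i))$3$3 = 2 * s4^2 * d2 - s4^2*(d3-d2)^2/d2"
    unfolding sum_component sum5 cov_acc_def Dinv using d s2sq s3sq
    by (simp add: E_def A_def W_def sc_def Vv_def Ww_def mdefs mm3 power2_eq_square field_simps)
  have "2 * s4^2 * (d3 - d2) * (d3 + d2) = 0" using inK d unfolding S22 S33 by (simp add: field_simps power2_eq_square)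
  moreover have "2 * s4^2 * (d3 - d2) * (d3 + d2) \<noteq> 0" using s4nz d32 d by simp
  ultimately show False by simp
qed



theorem proposition5p4:
  fixes a :: real
  assumes "a \<ge> 0"
  shows "cohomogeneity_one a
       \<and> singular_orbit a (mat 1)
       \<and> (\<forall>P \<in> PD. singular_orbit a P \<longleftrightarrow> orbit a P = orbit a (mat 1))
       \<and> minimal_submfd (orbit a (mat 1))
       \<and> (\<forall>P \<in> PD. minimal_submfd (orbit a P) \<longleftrightarrow> orbit a P = orbit a (mat 1))"
proof -
  have "\<forall>P \<in> PD. minimal_submfd (orbit a P) \<longleftrightarrow> orbit a P = orbit a (mat 1)"
  proof
    fix P assume P: "P \<in> PD"
    show "minimal_submfd (orbit a P) \<longleftrightarrow> orbit a P = orbit a (mat 1)"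
    proof (cases "inL P")
      case True thus ?thesis using classify(1)[OF P True] minimal_I by simp
    next
      case False
      obtain d1 d2 d3 where "d1 > 0" "d2 > 0" "d3 > 0" "d2 \<noteq> d3" "orbit a P = orbit a (diag3 d1 d2 d3)"
        using classify(2)[OF P False] by blast
      thus ?thesis using not_minimal_D not_inL_orbit[OF False] by metis
    qed
  qed
  thus ?thesis using part1 minimal_I by blast
qed


end
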